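(* For every $f\in L^{\infty}(\mathbb{R}_+)$, $\omega\in\Omega^*$ and integer $n\ge1$, and every $x\in\mathbb{R}$, $(S^nf)_\omega(x)=(f_\omega*h^n)(x)=\int_0^{\infty}f_\omega(x-t)e^{-t}\frac{t^{n-1}}{(n-1)!}\,dt$.
   Context: $L^{\infty}(\mathbb{R}_+)$: real-valued essentially bounded measurable functions on $[0,\infty)$; $(Sf)(x)=e^{-x}\int_0^xf(t)e^t\,dt$. $h(x)=e^{-x}$ for $x\ge0$, $h(x)=0$ for $x<0$; $h^n=h*\cdots*h$ ($n$ factors), $(g*\phi)(x)=\int_{\mathbb{R}}g(x-t)\phi(t)\,dt$. Let $\beta\mathbb{N}_0$ be the Stone–Čech compactification of $\mathbb{N}_0$ (points = ultrafilters), $\tau$ the extension of $n\mapsto n+1$, $\Omega=(\beta\mathbb{N}_0\times[0,1])/\sim$ with $(\tau\eta,0)\sim(\eta,1)$, containing $\mathbb{R}_+$ via $(n,t)\mapsto n+t$, $\Omega^*=\Omega\setminus\mathbb{R}_+$ with flow $\tau^s(\eta,t)=(\tau^{[t+s]}\eta,t+s-[t+s])$. Each $\omega=(\eta,t)$ is identified with the ultrafilter $\{A+t:A\in\eta\}$ on $\mathbb{R}_+$. For $g\in L^{\infty}(\mathbb{R}_+)$, $g_\omega=\omega\text{-}\lim_sg(\cdot+s)$ (weak* limit in $L^{\infty}(\mathbb{R}_+)=L^1(\mathbb{R}_+)^*$ along $\omega$), extended to $\mathbb{R}$ by $g_\omega(x)=g_{\tau^{-N}\omega}(N+x)$ for $x\in[-N,0]$,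 $N>0$. *)

theory Defs
  imports "HOL-Analysis.Analysis"
begin

text \<open>Elements of L-infinity on [0,inf): real functions (only values on [0,inf) matter)
  that are Lebesgue measurable on [0,inf) and essentially bounded there.\<close>
definition Linf_pos :: "(real \<Rightarrow> real) \<Rightarrow> bool" where
  "Linf_pos g \<longleftrightarrow> set_borel_measurable lebesgue {0..} g \<and>
     (\<exists>C. AE x in lebesgue. x \<in> {0..} \<longrightarrow> \<bar>g x\<bar> \<le> C)"

definition S_op :: "(real \<Rightarrow> real) \<Rightarrow> real \<Rightarrow> real" where
  "S_op f x = exp (- x) * (LINT t:{0..x}|lebesgue. f t * exp t)"

text \<open>Ultrafilters on the naturals (points of the Stone-Cech compactification).\<close>
definition ultrafilter_on :: "'a filter \<Rightarrow> bool" where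
  "ultrafilter_on F \<longleftrightarrow> F \<noteq> bot \<and> (\<forall>P. eventually P F \<or> eventually (\<lambda>x. \<not> P x) F)"

text \<open>The ultrafilter on [0,inf) associated with omega = (eta,t): {A + t : A in eta}.\<close>
definition omega_filter :: "nat filter \<Rightarrow> real \<Rightarrow> real filter" where
  "omega_filter \<eta> t = filtermap (\<lambda>n. real n + t) \<eta>"

definition tau_inv :: "nat \<Rightarrow> nat filter \<Rightarrow> nat filter" where
  "tau_inv N \<eta> = filtermap (\<lambda>n. n - N) \<eta>"

text \<open>Weak-star limit in L-infinity(R+) = L1(R+)* of the translates g(. + s) along F.\<close>
definition is_wstar_lim :: "real filter \<Rightarrow> (real \<Rightarrow> real) \<Rightarrow> (real \<Rightarrow> real) \<Rightarrow> bool" where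
  "is_wstar_lim F g G \<longleftrightarrow> Linf_pos G \<and>
     (\<forall>\<phi>. set_integrable lebesgue {0..} \<phi> \<longrightarrow>
        ((\<lambda>s. LINT x:{0..}|lebesgue. g (x + s) * \<phi> x)
           \<longlongrightarrow> (LINT x:{0..}|lebesgue. G x * \<phi> x)) F)"

definition wstar_lim :: "real filter \<Rightarrow> (real \<Rightarrow> real) \<Rightarrow> real \<Rightarrow> real" where
  "wstar_lim F g = (SOME G. is_wstar_lim F g G)"

definition g_omega :: "nat filter \<Rightarrow> real \<Rightarrow> (real \<Rightarrow> real) \<Rightarrow> real \<Rightarrow> real" where
  "g_omega \<eta> t g x =
     (if 0 \<le> x then wstar_lim (omega_filter \<eta> t) g x
      else (let N = nat \<lceil>- x\<rceil> in wstar_lim (omega_filter (tau_inv N \<eta>) t) g (real N + x)))"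

definition h_fun :: "real \<Rightarrow> real" where
  "h_fun x = (if 0 \<le> x then exp (- x) else 0)"

definition conv :: "(real \<Rightarrow> real) \<Rightarrow> (real \<Rightarrow> real) \<Rightarrow> real \<Rightarrow> real" where
  "conv g \<phi> x = (LINT t|lebesgue. g (x - t) * \<phi> t)"

fun h_pow :: "nat \<Rightarrow> real \<Rightarrow> real" where
  "h_pow 0 = h_fun"
| "h_pow (Suc 0) = h_fun"
| "h_pow (Suc (Suc n)) = conv h_fun (h_pow (Suc n))"

end

theory Submission
  imports Defs "HOL-Probability.Distributions"
begin

lemma approx_tendsto:
  fixes a :: "'b \<Rightarrow> real"
  assumes "\<And>e. e > 0 \<Longrightarrow> \<exists>b Lb. (b \<longlongrightarrow> Lb) F \<and> (\<forall>\<^sub>F s in F. \<bar>a s - b s\<bar> \<le> e) \<and> \<bar>L - Lb\<bar> \<le> e"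
  shows "(a \<longlongrightarrow> L) F"
proof (rule tendstoI)
  fix e::real assume "e>0"
  then obtain b Lb where b: "(b \<longlongrightarrow> Lb) F" "\<forall>\<^sub>F s in F. \<bar>a s - b s\<bar> \<le> e/4" "\<bar>L - Lb\<bar> \<le> e/4"
    using assms[of "e/4"] by auto
  have "\<forall>\<^sub>F s in F. dist (b s) Lb < e/4" using tendstoD[OF b(1), of "e/4"] \<open>e>0\<close> by simp
  with b(2) show "\<forall>\<^sub>F s in F. dist (a s) L < e"
    by eventually_elim (use b(3) in \<open>simp add: dist_real_def, smt (verit)\<close>)
qed

lemma ultra_lim_exists:
  fixes b :: "'b \<Rightarrow> real"
  assumes U: "ultrafilter_on F" and ev: "\<forall>\<^sub>F s in F. b s \<in> {lo..hi}"
  shows "\<exists>L. (b \<longlongrightarrow> L) F"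
proof -
  have Fb: "filtermap b F \<noteq> bot" using U by (simp add: ultrafilter_on_def filtermap_bot_iff)
  have "eventually (\<lambda>x. x \<in> {lo..hi}) (filtermap b F)" using ev by (simp add: eventually_filtermap)
  then obtain x where x: "inf (nhds x) (filtermap b F) \<noteq> bot"
    using compact_filter[THEN iffD1, OF compact_Icc] Fb by blast
  have "(b \<longlongrightarrow> x) F"
  proof (rule topological_tendstoI)
    fix S assume S: "open S" "x \<in> S"
    show "\<forall>\<^sub>F s in F. b s \<in> S"
    proof (rule ccontr)
      assume "\<not> (\<forall>\<^sub>F s in F. b s \<in> S)"
      then have "\<forall>\<^sub>F s in F. b s \<notin> S" using U unfolding ultrafilter_on_def by blast
      then have e2: "eventually (\<lambda>y. y \<notin> S) (filtermap b F)" by (simp add: eventually_filtermap)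
      have e1: "eventually (\<lambda>y. y \<in> S) (nhds x)" using S by (rule eventually_nhds_in_open)
      have "eventually (\<lambda>_. False) (inf (nhds x) (filtermap b F))"
        unfolding eventually_inf using e1 e2 by blast
      with x show False by (simp add: eventually_False)
    qed
  qed
  then show ?thesis by blast
qed

lemma ultrafilter_filtermap:
  assumes "ultrafilter_on F" shows "ultrafilter_on (filtermap g F)"
  using assms by (simp add: ultrafilter_on_def eventually_filtermap filtermap_bot_iff)

definition Fw :: "nat filter \<Rightarrow> real \<Rightarrow> nat \<Rightarrow> real filter" where
  "Fw \<eta> t N = omega_filter (tau_inv N \<eta>) t"

lemma Fw_eq: "Fw \<eta> t N = filtermap (\<lambda>n. real (n - N) + t) \<eta>"
  by (simp add: Fw_def omega_filter_def tau_inv_def filtermap_filtermap o_def)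

lemma Fw_0: "Fw \<eta> t 0 = omega_filter \<eta> t"
  by (simp add: Fw_eq omega_filter_def)

lemma Fw_ultra: "ultrafilter_on \<eta> \<Longrightarrow> ultrafilter_on (Fw \<eta> t N)"
  unfolding Fw_eq by (rule ultrafilter_filtermap)

lemma Fw_nbot: "ultrafilter_on \<eta> \<Longrightarrow> Fw \<eta> t N \<noteq> bot"
  using Fw_ultra ultrafilter_on_def by blast

lemma eta_ev_ge: assumes "\<eta> \<le> cofinite" shows "\<forall>\<^sub>F n in \<eta>. n \<ge> (M::nat)"
proof -
  have "\<forall>\<^sub>F n in sequentially. n \<ge> M" by (rule eventually_ge_at_top)
  then show ?thesis using assms cofinite_eq_sequentially filter_leD by metis
qed

lemma Fw_ev_ge:
  assumes "\<eta> \<le> cofinite" "t \<ge> 0"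
  shows "\<forall>\<^sub>F s in Fw \<eta> t N. s \<ge> a"
proof -
  obtain M :: nat where "a \<le> real M" using real_arch_simple by blast
  have "\<forall>\<^sub>F n in \<eta>. n \<ge> M + N" by (rule eta_ev_ge[OF assms(1)])
  then have "\<forall>\<^sub>F n in \<eta>. real (n - N) + t \<ge> a"
    by eventually_elim (use \<open>a \<le> real M\<close> assms(2) in auto)
  then show ?thesis by (simp add: Fw_eq eventually_filtermap)
qed

lemma Fw_shift:
  assumes "\<eta> \<le> cofinite"
  shows "Fw \<eta> t N = filtermap (\<lambda>s. s + real D) (Fw \<eta> t (N + D))"
proof -
  have ev: "\<forall>\<^sub>F n in \<eta>. n \<ge> N + D" by (rule eta_ev_ge[OF assms])
  have "eventually P (filtermap (\<lambda>n. real (n - N) + t) \<eta>) =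
          eventually P (filtermap (\<lambda>s. s + real D) (filtermap (\<lambda>n. real (n - (N + D)) + t) \<eta>))" for P
    unfolding eventually_filtermap
  proof (rule eventually_subst)
    show "\<forall>\<^sub>F n in \<eta>. P (real (n - N) + t) = P (real (n - (N + D)) + t + real D)"
      using ev by eventually_elim (auto simp: algebra_simps of_nat_diff)
  qed
  then show ?thesis unfolding Fw_eq by (simp add: filter_eq_iff)
qed

lemma AE_lebesgue_affine:
  fixes c t :: real
  assumes c: "c \<noteq> 0" and ae: "AE x in lebesgue. P x"
  shows "AE x in lebesgue. P (t + c * x)"
proof -
  from ae obtain N where N: "{x \<in> space lebesgue. \<not> P x} \<subseteq> N" "emeasure lebesgue N = 0" "N \<in> sets lebesgue"
    by (rule AE_E)
  have Tm: "(\<lambda>x. t + c * x) \<in> lebesgue \<rightarrow>\<^sub>M lebesgue"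
    using lebesgue_affine_measurable[where c= "\<lambda>x::real. c" and t=t] c by simp
  have "N \<in> null_sets lebesgue" using N by auto
  then have "N \<in> null_sets (density (distr lebesgue lebesgue (\<lambda>x. t + c * x)) (\<lambda>_. ennreal \<bar>c\<bar>))"
    using lebesgue_real_affine[OF c, of t] by metis
  then have "AE x in distr lebesgue lebesgue (\<lambda>x. t + c * x). x \<in> N \<longrightarrow> ennreal \<bar>c\<bar> = 0"
    by (subst (asm) null_sets_density_iff) auto
  then have "AE x in distr lebesgue lebesgue (\<lambda>x. t + c * x). x \<notin> N" using c by simp
  have "space lebesgue - N \<in> sets lebesgue" using N(3) by auto
  moreover have "{x \<in> space lebesgue. x \<notin> N} = space lebesgue - N" by auto
  ultimately have Nm: "{x \<in> space lebesgue. x \<notin> N} \<in> sets lebesgue" by simp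
  from \<open>AE x in distr lebesgue lebesgue (\<lambda>x. t + c * x). x \<notin> N\<close>
  have "AE x in lebesgue. t + c * x \<notin> N"
    by (subst (asm) AE_distr_iff[OF Tm Nm])
  then show ?thesis by eventually_elim (use N(1) in auto)
qed

lemma AE_lebesgue_shift:
  fixes d :: real
  assumes "AE x in lebesgue. P x" shows "AE x in lebesgue. P (x + d)"
  using AE_lebesgue_affine[of 1 P d] assms by (simp add: add.commute)

lemma AE_lebesgue_refl:
  fixes d :: real
  assumes "AE x in lebesgue. P x" shows "AE x in lebesgue. P (d - x)"
  using AE_lebesgue_affine[of "-1" P d] assms by simp

lemma borel_lebesgue: "f \<in> borel_measurable borel \<Longrightarrow> f \<in> borel_measurable (lebesgue :: real measure)"
  by (simp add: measurable_completion)

lemma integral_lebesgue_borel: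
  fixes f :: "real \<Rightarrow> real"
  shows "f \<in> borel_measurable borel \<Longrightarrow> integral\<^sup>L lebesgue f = integral\<^sup>L lborel f"
  by (rule integral_completion) simp

lemma integrable_lebesgue_borel:
  fixes f :: "real \<Rightarrow> real"
  shows "f \<in> borel_measurable borel \<Longrightarrow> integrable lebesgue f \<longleftrightarrow> integrable lborel f"
  by (rule integrable_completion) simp

lemma shift_borel[measurable]:
  fixes g :: "real \<Rightarrow> real"
  assumes [measurable]: "g \<in> borel_measurable borel"
  shows "(\<lambda>x. g (x + s)) \<in> borel_measurable borel"
  by measurable

lemma phi_rep:
  fixes \<phi> :: "real \<Rightarrow> real"
  assumes "set_integrable lebesgue {0..} \<phi>"
  obtains \<phi>0 where "\<phi>0 \<in> borel_measurable borel" "integrable lborel \<phi>0" "\<And>x. x < 0 \<Longrightarrow> \<phi>0 x = 0"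
    "AE x in lebesgue. indicator {0..} x * \<phi> x = \<phi>0 x"
proof -
  have I: "integrable lebesgue (\<lambda>x. indicator {0..} x * \<phi> x)"
    using assms by (simp add: set_integrable_def)
  then have "(\<lambda>x. indicator {0..} x * \<phi> x) \<in> borel_measurable (completion lborel)" by auto
  from completion_ex_borel_measurable_real[OF this]
  obtain \<phi>1 where p1: "\<phi>1 \<in> borel_measurable lborel" "AE x in lborel. indicator {0..} x * \<phi> x = \<phi>1 x"
    by blast
  define \<phi>0 where "\<phi>0 x = indicator {0..} x * \<phi>1 x" for x
  have m: "\<phi>0 \<in> borel_measurable borel" using p1(1) unfolding \<phi>0_def by simp
  have ae: "AE x in lborel. indicator {0..} x * \<phi> x = \<phi>0 x"
    using p1(2) by eventually_elim (auto simp: \<phi>0_def indicator_def)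
  then have ae2: "AE x in lebesgue. indicator {0..} x * \<phi> x = \<phi>0 x" by (rule AE_completion)
  have "integrable lebesgue \<phi>0"
    by (rule integrable_cong_AE_imp[OF I]) (use ae2 m in \<open>auto simp: borel_lebesgue\<close>)
  then have "integrable lborel \<phi>0" using integrable_lebesgue_borel[OF m] by simp
  then show ?thesis by (rule that[OF m _ _ ae2]) (simp add: \<phi>0_def)
qed

lemma set_integral_rep:
  fixes \<phi> \<phi>0 H :: "real \<Rightarrow> real"
  assumes "AE x in lebesgue. indicator {0..} x * \<phi> x = \<phi>0 x"
    and "H \<in> borel_measurable borel" "\<phi>0 \<in> borel_measurable borel"
    and "(\<lambda>x. indicator {0..} x * \<phi> x) \<in> borel_measurable lebesgue"
  shows "(LINT x:{0..}|lebesgue. H x * \<phi> x) = (\<integral>x. H x * \<phi>0 x \<partial>lborel)"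
proof -
  have "(LINT x:{0..}|lebesgue. H x * \<phi> x) = (\<integral>x. H x * (indicator {0..} x * \<phi> x) \<partial>lebesgue)"
    unfolding set_lebesgue_integral_def by (rule Bochner_Integration.integral_cong) (auto simp: indicator_def)
  also have "\<dots> = (\<integral>x. H x * \<phi>0 x \<partial>lebesgue)"
  proof (rule integral_cong_AE)
    show "(\<lambda>x. H x * (indicator {0..} x * \<phi> x)) \<in> borel_measurable lebesgue"
      using borel_lebesgue[OF assms(2)] assms(4) by (rule borel_measurable_times)
    show "(\<lambda>x. H x * \<phi>0 x) \<in> borel_measurable lebesgue"
      using borel_lebesgue[OF assms(2)] borel_lebesgue[OF assms(3)] by (rule borel_measurable_times)
    show "AE x in lebesgue. H x * (indicator {0..} x * \<phi> x) = H x * \<phi>0 x"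
      using assms(1) by eventually_elim simp
  qed
  also have "\<dots> = (\<integral>x. H x * \<phi>0 x \<partial>lborel)"
    by (rule integral_lebesgue_borel) (use assms in auto)
  finally show ?thesis .
qed

lemma Linf_pos_I:
  assumes "G \<in> borel_measurable borel" "AE x in lebesgue. x \<ge> 0 \<longrightarrow> \<bar>G x\<bar> \<le> C"
  shows "Linf_pos G"
  unfolding Linf_pos_def set_borel_measurable_def using assms by (auto intro!: borel_lebesgue)

lemma set_integrable_rep:
  fixes \<phi>0 :: "real \<Rightarrow> real"
  assumes "\<phi>0 \<in> borel_measurable borel" "integrable lborel \<phi>0" "\<And>x. x < 0 \<Longrightarrow> \<phi>0 x = 0"
  shows "set_integrable lebesgue {0..} \<phi>0"
    and "AE x in lebesgue. indicator {0..} x * \<phi>0 x = \<phi>0 x"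
    and "(\<lambda>x. indicator {0..} x * \<phi>0 x) \<in> borel_measurable lebesgue"
proof -
  have e: "(\<lambda>x. indicator {0..} x * \<phi>0 x) = \<phi>0" using assms(3) by (auto simp: indicator_def fun_eq_iff)
  show "set_integrable lebesgue {0..} \<phi>0" unfolding set_integrable_def
    using e assms integrable_lebesgue_borel[OF assms(1)] by simp
  show "AE x in lebesgue. indicator {0..} x * \<phi>0 x = \<phi>0 x"
    by (rule AE_I2) (use assms(3) in \<open>auto simp: indicator_def\<close>)
  show "(\<lambda>x. indicator {0..} x * \<phi>0 x) \<in> borel_measurable lebesgue" using e assms(1) borel_lebesgue by simp
qed

lemma wstar_borel_D:
  fixes g G \<phi>0 :: "real \<Rightarrow> real"
  assumes "is_wstar_lim F g G" "g \<in> borel_measurable borel" "G \<in> borel_measurable borel"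
    "\<phi>0 \<in> borel_measurable borel" "integrable lborel \<phi>0" "\<And>x. x < 0 \<Longrightarrow> \<phi>0 x = 0"
  shows "((\<lambda>s. \<integral>x. g (x + s) * \<phi>0 x \<partial>lborel) \<longlongrightarrow> (\<integral>x. G x * \<phi>0 x \<partial>lborel)) F"
proof -
  note r = set_integrable_rep[OF assms(4-6)]
  have "((\<lambda>s. LINT x:{0..}|lebesgue. g (x + s) * \<phi>0 x) \<longlongrightarrow> (LINT x:{0..}|lebesgue. G x * \<phi>0 x)) F"
    using assms(1) r(1) unfolding is_wstar_lim_def by blast
  moreover have "(LINT x:{0..}|lebesgue. g (x + s) * \<phi>0 x) = (\<integral>x. g (x + s) * \<phi>0 x \<partial>lborel)" for s
    by (rule set_integral_rep[OF r(2) shift_borel[OF assms(2)] assms(4) r(3)])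
  moreover have "(LINT x:{0..}|lebesgue. G x * \<phi>0 x) = (\<integral>x. G x * \<phi>0 x \<partial>lborel)"
    by (rule set_integral_rep[OF r(2) assms(3) assms(4) r(3)])
  ultimately show ?thesis by simp
qed

lemma wstar_borel_I:
  fixes g G :: "real \<Rightarrow> real"
  assumes "Linf_pos G" "g \<in> borel_measurable borel" "G \<in> borel_measurable borel"
    and lim: "\<And>\<phi>0. \<phi>0 \<in> borel_measurable borel \<Longrightarrow> integrable lborel \<phi>0 \<Longrightarrow> (\<And>x. x < 0 \<Longrightarrow> \<phi>0 x = 0) \<Longrightarrow>
      ((\<lambda>s. \<integral>x. g (x + s) * \<phi>0 x \<partial>lborel) \<longlongrightarrow> (\<integral>x. G x * \<phi>0 x \<partial>lborel)) F"
  shows "is_wstar_lim F g G"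
  unfolding is_wstar_lim_def
proof (intro conjI allI impI)
  show "Linf_pos G" by fact
  fix \<phi> :: "real \<Rightarrow> real" assume \<phi>: "set_integrable lebesgue {0..} \<phi>"
  obtain \<phi>0 where p: "\<phi>0 \<in> borel_measurable borel" "integrable lborel \<phi>0" "\<And>x. x < 0 \<Longrightarrow> \<phi>0 x = 0"
    "AE x in lebesgue. indicator {0..} x * \<phi> x = \<phi>0 x" using phi_rep[OF \<phi>] by blast
  have m: "(\<lambda>x. indicator {0..} x * \<phi> x) \<in> borel_measurable lebesgue"
    using \<phi> unfolding set_integrable_def by auto
  have "(LINT x:{0..}|lebesgue. g (x + s) * \<phi> x) = (\<integral>x. g (x + s) * \<phi>0 x \<partial>lborel)" for s
    by (rule set_integral_rep[OF p(4) _ p(1) m]) (use shift_borel[OF assms(2)] in simp)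
  moreover have "(LINT x:{0..}|lebesgue. G x * \<phi> x) = (\<integral>x. G x * \<phi>0 x \<partial>lborel)"
    by (rule set_integral_rep[OF p(4) assms(3) p(1) m])
  ultimately show "((\<lambda>s. LINT x:{0..}|lebesgue. g (x + s) * \<phi> x) \<longlongrightarrow> (LINT x:{0..}|lebesgue. G x * \<phi> x)) F"
    using lim[OF p(1-3)] by simp
qed

lemma emeasure_lebesgue_Icc_fin: "emeasure lebesgue {a..b::real} < \<infinity>"
  by (simp add: emeasure_completion emeasure_lborel_Icc_eq)

lemma wstar_unique:
  fixes g G1 G2 :: "real \<Rightarrow> real"
  assumes F: "F \<noteq> bot" and W1: "is_wstar_lim F g G1" and W2: "is_wstar_lim F g G2"
  shows "AE x in lebesgue. x \<ge> 0 \<longrightarrow> G1 x = G2 x"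
proof -
  from W1 obtain C1 where m1: "(\<lambda>x. indicator {0..} x * G1 x) \<in> borel_measurable lebesgue"
      and b1: "AE x in lebesgue. x \<in> {0..} \<longrightarrow> \<bar>G1 x\<bar> \<le> C1"
    unfolding is_wstar_lim_def Linf_pos_def set_borel_measurable_def by auto
  from W2 obtain C2 where m2: "(\<lambda>x. indicator {0..} x * G2 x) \<in> borel_measurable lebesgue"
      and b2: "AE x in lebesgue. x \<in> {0..} \<longrightarrow> \<bar>G2 x\<bar> \<le> C2"
    unfolding is_wstar_lim_def Linf_pos_def set_borel_measurable_def by auto
  define D where "D x = indicator {0..} x * G1 x - indicator {0..} x * G2 x" for x
  have mD: "D \<in> borel_measurable lebesgue" unfolding D_def using m1 m2 by auto
  have k: "AE x in lebesgue. indicator {0..real k} x * \<bar>D x\<bar> = 0" for k :: nat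
  proof -
    define \<phi> where "\<phi> x = indicator {0..real k} x * sgn (D x)" for x
    have "(\<lambda>x. sgn (D x)) \<in> borel_measurable lebesgue"
      using measurable_compose[OF mD borel_measurable_sgn] by (simp add: o_def)
    then have mphi: "\<phi> \<in> borel_measurable lebesgue" unfolding \<phi>_def
      by (intro borel_measurable_times[OF _ \<open>(\<lambda>x. sgn (D x)) \<in> borel_measurable lebesgue\<close>] borel_lebesgue) simp
    have Ik: "integrable lebesgue (indicator {0..real k} :: real \<Rightarrow> real)"
      by (rule integrable_real_indicator) (auto simp: emeasure_lebesgue_Icc_fin)
    have sI: "set_integrable lebesgue {0..} \<phi>" unfolding set_integrable_def
    proof (rule Bochner_Integration.integrable_bound[OF Ik])
      show "(\<lambda>x. indicator {0..} x *\<^sub>R \<phi> x) \<in> borel_measurable lebesgue"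
        by (rule borel_measurable_scaleR[OF borel_lebesgue mphi]) simp
      have "norm (indicator {0..} x *\<^sub>R \<phi> x) \<le> norm (indicator {0..real k} x :: real)" for x
        by (simp add: \<phi>_def indicator_def sgn_if)
      then show "AE x in lebesgue. norm (indicator {0..} x *\<^sub>R \<phi> x) \<le> norm (indicator {0..real k} x :: real)"
        by simp
    qed
    have l1: "((\<lambda>s. LINT x:{0..}|lebesgue. g (x + s) * \<phi> x) \<longlongrightarrow> (LINT x:{0..}|lebesgue. G1 x * \<phi> x)) F"
      using W1 sI unfolding is_wstar_lim_def by blast
    have l2: "((\<lambda>s. LINT x:{0..}|lebesgue. g (x + s) * \<phi> x) \<longlongrightarrow> (LINT x:{0..}|lebesgue. G2 x * \<phi> x)) F"
      using W2 sI unfolding is_wstar_lim_def by blast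
    have eq: "(LINT x:{0..}|lebesgue. G1 x * \<phi> x) = (LINT x:{0..}|lebesgue. G2 x * \<phi> x)"
      using tendsto_unique[OF F l1 l2] .
    have int1: "integrable lebesgue (\<lambda>x. indicator {0..} x * G1 x * \<phi> x)"
    proof (rule Bochner_Integration.integrable_bound[of _ "\<lambda>x. C1 * indicator {0..real k} x"])
      show "integrable lebesgue (\<lambda>x. C1 * indicator {0..real k} x)" using Ik by simp
      show "(\<lambda>x. indicator {0..} x * G1 x * \<phi> x) \<in> borel_measurable lebesgue" using m1 mphi by auto
      show "AE x in lebesgue. norm (indicator {0..} x * G1 x * \<phi> x) \<le> norm (C1 * indicator {0..real k} x)"
        using b1 by eventually_elim (auto simp: \<phi>_def indicator_def sgn_if abs_mult)
    qed
    have int2: "integrable lebesgue (\<lambda>x. indicator {0..} x * G2 x * \<phi> x)"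
    proof (rule Bochner_Integration.integrable_bound[of _ "\<lambda>x. C2 * indicator {0..real k} x"])
      show "integrable lebesgue (\<lambda>x. C2 * indicator {0..real k} x)" using Ik by simp
      show "(\<lambda>x. indicator {0..} x * G2 x * \<phi> x) \<in> borel_measurable lebesgue" using m2 mphi by auto
      show "AE x in lebesgue. norm (indicator {0..} x * G2 x * \<phi> x) \<le> norm (C2 * indicator {0..real k} x)"
        using b2 by eventually_elim (auto simp: \<phi>_def indicator_def sgn_if abs_mult)
    qed
    have "(\<integral>x. indicator {0..} x * G1 x * \<phi> x \<partial>lebesgue) = (\<integral>x. indicator {0..} x * G2 x * \<phi> x \<partial>lebesgue)"
      using eq unfolding set_lebesgue_integral_def by (simp add: mult.assoc)
    then have "(\<integral>x. indicator {0..} x * G1 x * \<phi> x - indicator {0..} x * G2 x * \<phi> x \<partial>lebesgue) = 0"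
      using int1 int2 by simp
    moreover have "(\<lambda>x. indicator {0..} x * G1 x * \<phi> x - indicator {0..} x * G2 x * \<phi> x) =
        (\<lambda>x. indicator {0..real k} x * \<bar>D x\<bar>)"
      by (simp add: fun_eq_iff \<phi>_def D_def indicator_def sgn_if)
    ultimately have z: "(\<integral>x. indicator {0..real k} x * \<bar>D x\<bar> \<partial>lebesgue) = 0" by simp
    have "integrable lebesgue (\<lambda>x. indicator {0..real k} x * \<bar>D x\<bar>)"
    proof -
      have "integrable lebesgue (\<lambda>x. indicator {0..} x * G1 x * \<phi> x - indicator {0..} x * G2 x * \<phi> x)"
        using int1 int2 by simp
      moreover have "(\<lambda>x. indicator {0..} x * G1 x * \<phi> x - indicator {0..} x * G2 x * \<phi> x) =
        (\<lambda>x. indicator {0..real k} x * \<bar>D x\<bar>)"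
        by (simp add: fun_eq_iff \<phi>_def D_def indicator_def sgn_if)
      ultimately show ?thesis by simp
    qed
    then show ?thesis using z by (subst (asm) integral_nonneg_eq_0_iff_AE) auto
  qed
  have "AE x in lebesgue. \<forall>k::nat. indicator {0..real k} x * \<bar>D x\<bar> = 0"
    using k by (subst AE_all_countable) auto
  then show ?thesis
  proof eventually_elim
    case (elim x)
    show ?case
    proof
      assume "x \<ge> 0"
      obtain k :: nat where "x \<le> real k" using real_arch_simple by blast
      with elim \<open>x \<ge> 0\<close> have "D x = 0" by (auto simp: indicator_def split: if_splits)
      with \<open>x \<ge> 0\<close> show "G1 x = G2 x" by (simp add: D_def)
    qed
  qed
qed

lemma wstar_cong:
  assumes "is_wstar_lim F g G" "Linf_pos G'" "AE x in lebesgue. x \<ge> 0 \<longrightarrow> G x = G' x"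
  shows "is_wstar_lim F g G'"
  unfolding is_wstar_lim_def
proof (intro conjI allI impI)
  show "Linf_pos G'" by fact
  fix \<phi> :: "real \<Rightarrow> real" assume \<phi>: "set_integrable lebesgue {0..} \<phi>"
  have l: "((\<lambda>s. LINT x:{0..}|lebesgue. g (x + s) * \<phi> x) \<longlongrightarrow> (LINT x:{0..}|lebesgue. G x * \<phi> x)) F"
    using assms(1) \<phi> unfolding is_wstar_lim_def by blast
  have m1: "(\<lambda>x. indicator {0..} x * G x) \<in> borel_measurable lebesgue"
    using assms(1) unfolding is_wstar_lim_def Linf_pos_def set_borel_measurable_def by auto
  have m2: "(\<lambda>x. indicator {0..} x * G' x) \<in> borel_measurable lebesgue"
    using assms(2) unfolding Linf_pos_def set_borel_measurable_def by auto
  have m3: "(\<lambda>x. indicator {0..} x * \<phi> x) \<in> borel_measurable lebesgue"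
    using \<phi> unfolding set_integrable_def by auto
  have "(LINT x:{0..}|lebesgue. G x * \<phi> x) = (LINT x:{0..}|lebesgue. G' x * \<phi> x)"
    unfolding set_lebesgue_integral_def
  proof (rule integral_cong_AE)
    have e: "(\<lambda>x. indicator {0..} x *\<^sub>R (G x * \<phi> x)) = (\<lambda>x. (indicator {0..} x * G x) * (indicator {0..} x * \<phi> x))"
      by (auto simp: fun_eq_iff indicator_def)
    show "(\<lambda>x. indicator {0..} x *\<^sub>R (G x * \<phi> x)) \<in> borel_measurable lebesgue"
      unfolding e using m1 m3 by auto
    have e2: "(\<lambda>x. indicator {0..} x *\<^sub>R (G' x * \<phi> x)) = (\<lambda>x. (indicator {0..} x * G' x) * (indicator {0..} x * \<phi> x))"
      by (auto simp: fun_eq_iff indicator_def)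
    show "(\<lambda>x. indicator {0..} x *\<^sub>R (G' x * \<phi> x)) \<in> borel_measurable lebesgue"
      unfolding e2 using m2 m3 by auto
    show "AE x in lebesgue. indicator {0..} x *\<^sub>R (G x * \<phi> x) = indicator {0..} x *\<^sub>R (G' x * \<phi> x)"
      using assms(3) by eventually_elim (auto simp: indicator_def)
  qed
  with l show "((\<lambda>s. LINT x:{0..}|lebesgue. g (x + s) * \<phi> x) \<longlongrightarrow> (LINT x:{0..}|lebesgue. G' x * \<phi> x)) F"
    by simp
qed

lemma tendsto_suminf_dominated:
  fixes b :: "nat \<Rightarrow> 'a \<Rightarrow> real"
  assumes F: "F \<noteq> bot" and lim: "\<And>i. (b i \<longlongrightarrow> L i) F"
    and bd: "\<And>i s. \<bar>b i s\<bar> \<le> m i" and sm: "summable m"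
  shows "((\<lambda>s. \<Sum>i. b i s) \<longlongrightarrow> (\<Sum>i. L i)) F"
proof -
  have Lb: "\<bar>L i\<bar> \<le> m i" for i
  proof -
    have "((\<lambda>s. \<bar>b i s\<bar>) \<longlongrightarrow> \<bar>L i\<bar>) F" using lim[of i] by (rule tendsto_rabs)
    then show ?thesis using F bd by (intro tendsto_upperbound[of "\<lambda>s. \<bar>b i s\<bar>"]) (auto intro: always_eventually)
  qed
  have smL: "summable (\<lambda>i. \<bar>L i\<bar>)" by (rule summable_comparison_test'[OF sm]) (use Lb in auto)
  have smb: "summable (\<lambda>i. \<bar>b i s\<bar>)" for s by (rule summable_comparison_test'[OF sm]) (use bd in auto)
  show ?thesis
  proof (rule approx_tendsto)
    fix e :: real assume "e > 0"
    then obtain n where n: "norm (\<Sum>i. m (i + n)) < e"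
      using suminf_exist_split[OF \<open>e>0\<close> sm] by blast
    have tail: "\<bar>\<Sum>i. c (i + n)\<bar> \<le> e" if c: "\<And>i. \<bar>c i\<bar> \<le> m i" for c :: "nat \<Rightarrow> real"
    proof -
      have s1: "summable (\<lambda>i. \<bar>c (i + n)\<bar>)"
        by (rule summable_comparison_test'[OF summable_ignore_initial_segment[OF sm, of n]]) (use c in auto)
      have "\<bar>\<Sum>i. c (i + n)\<bar> \<le> (\<Sum>i. \<bar>c (i + n)\<bar>)" using s1 by (rule summable_rabs)
      also have "\<dots> \<le> (\<Sum>i. m (i + n))"
        by (rule suminf_le) (use c s1 summable_ignore_initial_segment[OF sm, of n] in auto)
      also have "\<dots> \<le> e" using n by simp
      finally show ?thesis .
    qed
    show "\<exists>b' Lb. (b' \<longlongrightarrow> Lb) F \<and> (\<forall>\<^sub>F s in F. \<bar>(\<Sum>i. b i s) - b' s\<bar> \<le> e) \<and> \<bar>(\<Sum>i. L i) - Lb\<bar> \<le> e"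
    proof (intro exI conjI)
      show "((\<lambda>s. \<Sum>i<n. b i s) \<longlongrightarrow> (\<Sum>i<n. L i)) F" by (intro tendsto_sum lim)
      have "\<bar>(\<Sum>i. b i s) - (\<Sum>i<n. b i s)\<bar> \<le> e" for s
      proof -
        have "(\<Sum>i. b i s) = (\<Sum>i. b (i + n) s) + (\<Sum>i<n. b i s)"
          using summable_rabs_cancel[OF smb] by (rule suminf_split_initial_segment)
        then show ?thesis using tail[of "\<lambda>i. b i s"] bd by simp
      qed
      then show "\<forall>\<^sub>F s in F. \<bar>(\<Sum>i. b i s) - (\<Sum>i<n. b i s)\<bar> \<le> e" by simp
      have "(\<Sum>i. L i) = (\<Sum>i. L (i + n)) + (\<Sum>i<n. L i)"
        using summable_rabs_cancel[OF smL] by (rule suminf_split_initial_segment)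
      then show "\<bar>(\<Sum>i. L i) - (\<Sum>i<n. L i)\<bar> \<le> e" using tail[of L] Lb by simp
    qed
  qed
qed

definition Mw :: "real measure" where "Mw = density lborel (erlang_density 0 1)"

lemma Mw_prob: "prob_space Mw"
  unfolding Mw_def by (rule prob_space_erlang_density) simp

interpretation Mw: prob_space Mw by (rule Mw_prob)

lemma sets_Mw[simp, measurable_cong]: "sets Mw = sets borel"
  by (simp add: Mw_def)

lemma space_Mw[simp]: "space Mw = UNIV"
  by (simp add: Mw_def)

lemma e0_eq: "erlang_density 0 1 x = (if x < 0 then 0 else exp (- x))"
  by (simp add: erlang_density_def)

lemma Mw_borel[simp]: "(g \<in> borel_measurable Mw) = (g \<in> borel_measurable borel)"
  by (simp add: measurable_def)

lemma integrable_bdd_mult: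
  fixes B \<psi> :: "'a \<Rightarrow> real"
  assumes "integrable M \<psi>" "B \<in> borel_measurable M" "\<And>x. x \<in> space M \<Longrightarrow> \<bar>B x\<bar> \<le> K"
  shows "integrable M (\<lambda>x. B x * \<psi> x)"
proof (rule Bochner_Integration.integrable_bound[of _ "\<lambda>x. K * \<psi> x"])
  show "integrable M (\<lambda>x. K * \<psi> x)" using assms(1) by simp
  show "(\<lambda>x. B x * \<psi> x) \<in> borel_measurable M" using assms(1,2) by auto
  show "AE x in M. norm (B x * \<psi> x) \<le> norm (K * \<psi> x)"
    by (rule AE_I2) (use assms(3) in \<open>auto simp: abs_mult intro!: mult_right_mono intro: order_trans[OF _ abs_ge_self]\<close>)
qed

lemma integral_bdd_diff:
  fixes B \<psi>1 \<psi>2 :: "'a \<Rightarrow> real"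
  assumes "integrable M \<psi>1" "integrable M \<psi>2" "B \<in> borel_measurable M" "\<And>x. x \<in> space M \<Longrightarrow> \<bar>B x\<bar> \<le> K"
  shows "\<bar>(\<integral>x. B x * \<psi>1 x \<partial>M) - (\<integral>x. B x * \<psi>2 x \<partial>M)\<bar> \<le> K * (\<integral>x. \<bar>\<psi>1 x - \<psi>2 x\<bar> \<partial>M)"
proof -
  have i1: "integrable M (\<lambda>x. B x * \<psi>1 x)" by (rule integrable_bdd_mult) (use assms in auto)
  have i2: "integrable M (\<lambda>x. B x * \<psi>2 x)" by (rule integrable_bdd_mult) (use assms in auto)
  have "(\<integral>x. B x * \<psi>1 x \<partial>M) - (\<integral>x. B x * \<psi>2 x \<partial>M) = (\<integral>x. B x * (\<psi>1 x - \<psi>2 x) \<partial>M)"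
    using i1 i2 by (simp add: algebra_simps)
  also have "\<bar>\<dots>\<bar> \<le> (\<integral>x. \<bar>B x * (\<psi>1 x - \<psi>2 x)\<bar> \<partial>M)"
    using Bochner_Integration.integral_norm_bound[of M "\<lambda>x. B x * (\<psi>1 x - \<psi>2 x)"] by simp
  also have "\<dots> \<le> (\<integral>x. K * \<bar>\<psi>1 x - \<psi>2 x\<bar> \<partial>M)"
  proof (rule integral_mono)
    show "integrable M (\<lambda>x. \<bar>B x * (\<psi>1 x - \<psi>2 x)\<bar>)"
      by (intro integrable_abs integrable_bdd_mult) (use assms in auto)
    show "integrable M (\<lambda>x. K * \<bar>\<psi>1 x - \<psi>2 x\<bar>)" using assms by auto
    show "\<bar>B x * (\<psi>1 x - \<psi>2 x)\<bar> \<le> K * \<bar>\<psi>1 x - \<psi>2 x\<bar>" if "x \<in> space M" for x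
      using assms(4)[OF that] by (auto simp: abs_mult intro!: mult_right_mono)
  qed
  also have "\<dots> = K * (\<integral>x. \<bar>\<psi>1 x - \<psi>2 x\<bar> \<partial>M)" by simp
  finally show ?thesis .
qed

definition bA :: "(real \<Rightarrow> real) \<Rightarrow> real set \<Rightarrow> real \<Rightarrow> real" where
  "bA f A s = (\<integral>x. indicator A x * f (x + s) \<partial>Mw)"

context
  fixes f :: "real \<Rightarrow> real" and C :: real
  assumes fm[measurable]: "f \<in> borel_measurable borel" and f0: "\<And>x. 0 \<le> f x" and fC: "\<And>x. f x \<le> C"
begin

lemma bA_int: "A \<in> sets borel \<Longrightarrow> integrable Mw (\<lambda>x. indicator A x * f (x + s))"
proof (rule Mw.integrable_const_bound[where B=C])
  assume A: "A \<in> sets borel"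
  have "norm (indicator A x * f (x + s)) \<le> C" for x
    using f0[of "x+s"] fC[of "x+s"] by (auto simp: indicator_def)
  then show "AE x in Mw. norm (indicator A x * f (x + s)) \<le> C" by simp
  show "(\<lambda>x. indicator A x * f (x + s)) \<in> borel_measurable Mw" using A by simp
qed

lemma bA_bounds:
  assumes A: "A \<in> sets borel"
  shows "0 \<le> bA f A s" "bA f A s \<le> C * measure Mw A"
proof -
  show "0 \<le> bA f A s" unfolding bA_def by (rule integral_nonneg_AE) (simp add: f0)
  have "bA f A s \<le> (\<integral>x. indicator A x * C \<partial>Mw)" unfolding bA_def
  proof (rule integral_mono[OF bA_int[OF A]])
    have "integrable Mw (indicator A :: real \<Rightarrow> real)"
      by (rule integrable_real_indicator) (use A in \<open>auto simp: Mw.emeasure_finite less_top[symmetric]\<close>)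
    then show "integrable Mw (\<lambda>x. indicator A x * C)" by (rule integrable_mult_left)
    show "indicator A x * f (x + s) \<le> indicator A x * C" for x by (auto simp: indicator_def fC)
  qed
  also have "\<dots> = (\<integral>x. indicator A x \<partial>Mw) * C" by (rule integral_mult_left_zero)
  also have "\<dots> = C * measure Mw A" by simp
  finally show "bA f A s \<le> C * measure Mw A" .
qed

lemma bA_abs: "A \<in> sets borel \<Longrightarrow> \<bar>bA f A s\<bar> \<le> C * measure Mw A"
  using bA_bounds[of A s] by simp

definition LA :: "real filter \<Rightarrow> real set \<Rightarrow> real" where
  "LA F A = Lim F (bA f A)"

context
  fixes F :: "real filter"
  assumes U: "ultrafilter_on F"
begin

lemma F_nbot: "F \<noteq> bot" using U by (simp add: ultrafilter_on_def)

lemma LA_tendsto: assumes A: "A \<in> sets borel" shows "(bA f A \<longlongrightarrow> LA F A) F"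
proof -
  have "\<forall>\<^sub>F s in F. bA f A s \<in> {0..C * measure Mw A}"
    using bA_bounds[OF A] by (auto intro: always_eventually)
  from ultra_lim_exists[OF U this] obtain L where L: "(bA f A \<longlongrightarrow> L) F" by blast
  then have "LA F A = L" unfolding LA_def using F_nbot by (intro tendsto_Lim) auto
  with L show ?thesis by simp
qed

lemma LA_bounds: assumes A: "A \<in> sets borel" shows "0 \<le> LA F A" "LA F A \<le> C * measure Mw A"
proof -
  show "0 \<le> LA F A"
    by (rule tendsto_lowerbound[OF LA_tendsto[OF A]]) (use bA_bounds[OF A] F_nbot in \<open>auto intro: always_eventually\<close>)
  show "LA F A \<le> C * measure Mw A"
    by (rule tendsto_upperbound[OF LA_tendsto[OF A]]) (use bA_bounds[OF A] F_nbot in \<open>auto intro: always_eventually\<close>)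
qed

lemma LA_null: assumes A: "A \<in> null_sets Mw" shows "LA F A = 0"
proof -
  have "bA f A s = 0" for s unfolding bA_def
  proof (rule integral_eq_zero_AE)
    show "AE x in Mw. indicator A x * f (x + s) = 0"
      using AE_not_in[OF A] by eventually_elim simp
  qed
  then have "bA f A = (\<lambda>s. 0)" by (intro ext)
  then have "(bA f A \<longlongrightarrow> 0) F" by simp
  moreover have "A \<in> sets borel" using A by (simp add: null_sets_def)
  ultimately show ?thesis using LA_tendsto tendsto_unique[OF F_nbot] by blast
qed

lemma indicator_sums:
  fixes A :: "nat \<Rightarrow> real set" and c :: real
  assumes d: "disjoint_family A"
  shows "(\<lambda>i. indicator (A i) x * c) sums (indicator (\<Union>i. A i) x * c)"
proof (cases "x \<in> (\<Union>i. A i)")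
  case True
  then obtain j where j: "x \<in> A j" by auto
  have "(\<lambda>i. indicator (A i) x * c) = (\<lambda>i. if i = j then c else 0)"
    using d j by (auto simp: fun_eq_iff indicator_def disjoint_family_on_def)
  then show ?thesis using True j sums_single[of j "\<lambda>_. c"] by simp
next
  case False
  then show ?thesis by (simp add: indicator_def)
qed

lemma LA_countable:
  fixes A :: "nat \<Rightarrow> real set"
  assumes A: "range A \<subseteq> sets borel" and d: "disjoint_family A"
  shows "(\<lambda>i. LA F (A i)) sums LA F (\<Union>i. A i)"
proof -
  have UA: "(\<Union>i. A i) \<in> sets borel" using A by auto
  have mA: "(\<lambda>i. measure Mw (A i)) sums measure Mw (\<Union>i. A i)"
    by (rule measure_UNION) (use A d in \<open>auto simp: Mw.emeasure_finite\<close>)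
  then have smm: "summable (\<lambda>i. C * measure Mw (A i))" by (intro summable_mult) (simp add: sums_summable)
  have b_eq: "bA f (\<Union>i. A i) s = (\<Sum>i. bA f (A i) s)" for s
  proof -
    have "bA f (\<Union>i. A i) s = (\<integral>x. (\<Sum>i. indicator (A i) x * f (x + s)) \<partial>Mw)"
      unfolding bA_def using indicator_sums[OF d] by (simp add: sums_iff)
    also have "\<dots> = (\<Sum>i. bA f (A i) s)" unfolding bA_def
    proof (rule integral_suminf)
      show "integrable Mw (\<lambda>x. indicator (A i) x * f (x + s))" for i using A by (intro bA_int) auto
      show "AE x in Mw. summable (\<lambda>i. norm (indicator (A i) x * f (x + s)))"
        using indicator_sums[OF d, of _ "\<bar>f (x + s)\<bar>" for x] by (auto simp: abs_mult sums_iff intro!: AE_I2)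
      have "(\<integral>x. norm (indicator (A i) x * f (x + s)) \<partial>Mw) = bA f (A i) s" for i
        unfolding bA_def using f0 by (intro Bochner_Integration.integral_cong) (auto simp: abs_mult)
      then show "summable (\<lambda>i. \<integral>x. norm (indicator (A i) x * f (x + s)) \<partial>Mw)"
        using smm bA_bounds A by (auto intro!: summable_comparison_test'[OF smm])
    qed
    finally show ?thesis .
  qed
  have "((\<lambda>s. \<Sum>i. bA f (A i) s) \<longlongrightarrow> (\<Sum>i. LA F (A i))) F"
    by (rule tendsto_suminf_dominated[OF F_nbot _ _ smm]) (use A LA_tendsto bA_abs in auto)
  moreover have "bA f (\<Union>i. A i) = (\<lambda>s. \<Sum>i. bA f (A i) s)" using b_eq by (intro ext)
  ultimately have "((bA f (\<Union>i. A i)) \<longlongrightarrow> (\<Sum>i. LA F (A i))) F" by simp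
  then have eq: "LA F (\<Union>i. A i) = (\<Sum>i. LA F (A i))"
    using tendsto_unique[OF F_nbot LA_tendsto[OF UA]] by blast
  have "summable (\<lambda>i. LA F (A i))"
    by (rule summable_comparison_test'[OF smm]) (use A LA_bounds in auto)
  then show ?thesis using eq by (simp add: sums_iff)
qed

lemma RN_exists:
  obtains g where "g \<in> borel_measurable borel"
    "\<And>A. A \<in> sets borel \<Longrightarrow> (\<integral>\<^sup>+x. g x * indicator A x \<partial>Mw) = ennreal (LA F A)"
proof -
  define \<nu> where "\<nu> A = ennreal (LA F A)" for A
  define N where "N = measure_of UNIV (sets borel) \<nu>"
  have sa: "sigma_algebra UNIV (sets borel :: real set set)"
    using sets.sigma_algebra_axioms[of borel] by simp
  have pos: "positive (sets borel) \<nu>"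
    unfolding positive_def \<nu>_def using LA_null[of "{}"] by simp
  have ca: "countably_additive (sets borel) \<nu>"
    unfolding countably_additive_def
  proof (intro allI impI)
    fix A :: "nat \<Rightarrow> real set"
    assume A: "range A \<subseteq> sets borel" "disjoint_family A"
    have s: "(\<lambda>i. LA F (A i)) sums LA F (\<Union>i. A i)" by (rule LA_countable[OF A])
    have "(\<Sum>i. \<nu> (A i)) = ennreal (\<Sum>i. LA F (A i))"
      unfolding \<nu>_def by (rule suminf_ennreal2) (use A LA_bounds s in \<open>auto simp: sums_iff\<close>)
    also have "\<dots> = \<nu> (\<Union>i. A i)" using s by (simp add: \<nu>_def sums_iff)
    finally show "(\<Sum>i. \<nu> (A i)) = \<nu> (\<Union>i. A i)" .
  qed
  have eN: "emeasure N A = \<nu> A" if "A \<in> sets borel" for A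
    unfolding N_def by (rule emeasure_measure_of_sigma[OF sa pos ca that])
  have sN: "sets N = sets Mw"
    unfolding N_def using sa by (simp add: sigma_algebra.sigma_sets_eq)
  have ac: "absolutely_continuous Mw N"
    unfolding absolutely_continuous_def
  proof
    fix A assume A: "A \<in> null_sets Mw"
    then have Ab: "A \<in> sets borel" by (simp add: null_sets_def)
    show "A \<in> null_sets N" using eN[OF Ab] LA_null[OF A] sN Ab by (simp add: null_sets_def \<nu>_def)
  qed
  obtain g where g: "g \<in> borel_measurable Mw" "density Mw g = N"
    using Mw.Radon_Nikodym[OF ac sN] by blast
  show ?thesis
  proof (rule that)
    show "g \<in> borel_measurable borel" using g(1) by simp
    fix A :: "real set" assume A: "A \<in> sets borel"
    have "(\<integral>\<^sup>+x. g x * indicator A x \<partial>Mw) = emeasure (density Mw g) A"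
      by (rule emeasure_density[symmetric]) (use g(1) A in auto)
    also have "\<dots> = ennreal (LA F A)" using g(2) eN[OF A] by (simp add: \<nu>_def)
    finally show "(\<integral>\<^sup>+x. g x * indicator A x \<partial>Mw) = ennreal (LA F A)" .
  qed
qed

lemma C_nonneg: "0 \<le> C" using f0[of 0] fC[of 0] by simp

lemma g_bound:
  assumes gm[measurable]: "g \<in> borel_measurable borel"
    and gA: "\<And>A. A \<in> sets borel \<Longrightarrow> (\<integral>\<^sup>+x. g x * indicator A x \<partial>Mw) = ennreal (LA F A)"
  shows "AE x in Mw. g x \<le> ennreal C"
proof -
  define A where "A = {x. ennreal C < g x}"
  have A[measurable]: "A \<in> sets borel" unfolding A_def by measurable
  have "A \<in> null_sets Mw"
  proof (rule ccontr)
    assume nA: "A \<notin> null_sets Mw"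
    have fin: "(\<integral>\<^sup>+x. ennreal C * indicator A x \<partial>Mw) = ennreal (C * measure Mw A)"
      using A C_nonneg by (simp add: nn_integral_cmult_indicator Mw.emeasure_eq_measure ennreal_mult)
    have "(\<integral>\<^sup>+x. ennreal C * indicator A x \<partial>Mw) < (\<integral>\<^sup>+x. g x * indicator A x \<partial>Mw)"
    proof (rule nn_integral_less)
      show "(\<lambda>x. ennreal C * indicator A x) \<in> borel_measurable Mw" by simp
      show "(\<lambda>x. g x * indicator A x) \<in> borel_measurable Mw" by simp
      show "(\<integral>\<^sup>+x. ennreal C * indicator A x \<partial>Mw) \<noteq> \<infinity>" using fin by simp
      show "AE x in Mw. ennreal C * indicator A x \<le> g x * indicator A x"
        by (rule AE_I2) (auto simp: A_def indicator_def less_imp_le)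
      show "\<not> (AE x in Mw. g x * indicator A x \<le> ennreal C * indicator A x)"
      proof
        assume "AE x in Mw. g x * indicator A x \<le> ennreal C * indicator A x"
        then have "AE x in Mw. x \<notin> A" by eventually_elim (auto simp: A_def indicator_def split: if_splits)
        then have "A \<in> null_sets Mw" using AE_iff_null_sets[of A Mw] A by simp
        with nA show False by simp
      qed
    qed
    also have "\<dots> = ennreal (LA F A)" by (rule gA[OF A])
    also have "\<dots> \<le> ennreal (C * measure Mw A)" using LA_bounds[OF A] by simp
    finally show False using fin by simp
  qed
  then have "AE x in Mw. x \<notin> A" by (rule AE_not_in)
  then show ?thesis by eventually_elim (auto simp: A_def not_less)
qed

lemma G_exists:
  obtains G where "G \<in> borel_measurable borel" "\<And>x. 0 \<le> G x" "\<And>x. G x \<le> C"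
    "\<And>A. A \<in> sets borel \<Longrightarrow> (\<integral>x. indicator A x * G x \<partial>Mw) = LA F A"
proof -
  obtain g where gm[measurable]: "g \<in> borel_measurable borel"
    and gA: "\<And>A. A \<in> sets borel \<Longrightarrow> (\<integral>\<^sup>+x. g x * indicator A x \<partial>Mw) = ennreal (LA F A)"
    using RN_exists by blast
  have gb: "AE x in Mw. g x \<le> ennreal C" by (rule g_bound[OF gm gA])
  define G where "G x = min C (enn2real (g x))" for x
  show ?thesis
  proof (rule that)
    show "G \<in> borel_measurable borel" unfolding G_def by measurable
    show "0 \<le> G x" for x unfolding G_def using C_nonneg by simp
    show "G x \<le> C" for x unfolding G_def by simp
    fix A :: "real set" assume A[measurable]: "A \<in> sets borel"
    have "(\<integral>x. indicator A x * G x \<partial>Mw) = (\<integral>x. indicator A x * enn2real (g x) \<partial>Mw)"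
    proof (rule integral_cong_AE)
      show "(\<lambda>x. indicator A x * G x) \<in> borel_measurable Mw" unfolding G_def by simp
      show "(\<lambda>x. indicator A x * enn2real (g x)) \<in> borel_measurable Mw" by simp
      show "AE x in Mw. indicator A x * G x = indicator A x * enn2real (g x)"
        using gb
      proof eventually_elim
        case (elim x)
        have "enn2real (g x) \<le> enn2real (ennreal C)" by (rule enn2real_mono[OF elim]) simp
        then show ?case using C_nonneg by (simp add: G_def)
      qed
    qed
    also have "\<dots> = enn2real (\<integral>\<^sup>+x. ennreal (indicator A x * enn2real (g x)) \<partial>Mw)"
      by (rule integral_eq_nn_integral) auto
    also have "(\<integral>\<^sup>+x. ennreal (indicator A x * enn2real (g x)) \<partial>Mw) = (\<integral>\<^sup>+x. g x * indicator A x \<partial>Mw)"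
    proof (rule nn_integral_cong_AE)
      show "AE x in Mw. ennreal (indicator A x * enn2real (g x)) = g x * indicator A x"
        using gb by eventually_elim (auto simp: indicator_def ennreal_enn2real_if top_unique)
    qed
    also have "\<dots> = ennreal (LA F A)" by (rule gA[OF A])
    finally show "(\<integral>x. indicator A x * G x \<partial>Mw) = LA F A" using LA_bounds[OF A] by simp
  qed
qed

lemma Mw_weak:
  assumes Gm[measurable]: "G \<in> borel_measurable borel" and G0: "\<And>x. 0 \<le> G x" and GC: "\<And>x. G x \<le> C"
    and GA: "\<And>A. A \<in> sets borel \<Longrightarrow> (\<integral>x. indicator A x * G x \<partial>Mw) = LA F A"
    and psi: "integrable Mw \<psi>"
  shows "((\<lambda>s. \<integral>x. f (x + s) * \<psi> x \<partial>Mw) \<longlongrightarrow> (\<integral>x. G x * \<psi> x \<partial>Mw)) F"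
  using psi
proof (induct rule: integrable_induct)
  case (base A c)
  then have A: "A \<in> sets borel" by simp
  have e1: "(\<integral>x. f (x + s) * (indicator A x *\<^sub>R c) \<partial>Mw) = bA f A s * c" for s
  proof -
    have "(\<integral>x. f (x + s) * (indicator A x *\<^sub>R c) \<partial>Mw) = (\<integral>x. (indicator A x * f (x + s)) * c \<partial>Mw)"
      by (simp add: ac_simps)
    also have "\<dots> = bA f A s * c" unfolding bA_def by (rule integral_mult_left_zero)
    finally show ?thesis .
  qed
  have e2: "(\<integral>x. G x * (indicator A x *\<^sub>R c) \<partial>Mw) = LA F A * c"
  proof -
    have "(\<integral>x. G x * (indicator A x *\<^sub>R c) \<partial>Mw) = (\<integral>x. (indicator A x * G x) * c \<partial>Mw)"
      by (simp add: ac_simps)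
    also have "\<dots> = LA F A * c" using GA[OF A] by simp
    finally show ?thesis .
  qed
  show ?case unfolding e1 e2 by (intro tendsto_mult_right LA_tendsto A)
next
  case (add \<psi>1 \<psi>2)
  have fb: "\<bar>f (x + s)\<bar> \<le> C" for x s using f0[of "x+s"] fC[of "x+s"] by simp
  have Gb: "\<bar>G x\<bar> \<le> C" for x using G0[of x] GC[of x] by simp
  have i1: "integrable Mw (\<lambda>x. f (x + s) * \<psi>1 x)" "integrable Mw (\<lambda>x. f (x + s) * \<psi>2 x)" for s
    by (rule integrable_bdd_mult[OF add(1)], simp, rule fb) (rule integrable_bdd_mult[OF add(3)], simp, rule fb)
  have i2: "integrable Mw (\<lambda>x. G x * \<psi>1 x)" "integrable Mw (\<lambda>x. G x * \<psi>2 x)"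
    by (rule integrable_bdd_mult[OF add(1)], simp, rule Gb) (rule integrable_bdd_mult[OF add(3)], simp, rule Gb)
  have "((\<lambda>s. (\<integral>x. f (x + s) * \<psi>1 x \<partial>Mw) + (\<integral>x. f (x + s) * \<psi>2 x \<partial>Mw)) \<longlongrightarrow>
      (\<integral>x. G x * \<psi>1 x \<partial>Mw) + (\<integral>x. G x * \<psi>2 x \<partial>Mw)) F"
    by (intro tendsto_add add(2) add(4))
  moreover have "(\<integral>x. f (x + s) * (\<psi>1 x + \<psi>2 x) \<partial>Mw) = (\<integral>x. f (x + s) * \<psi>1 x \<partial>Mw) + (\<integral>x. f (x + s) * \<psi>2 x \<partial>Mw)" for s
    using i1[of s] by (simp add: distrib_left)
  moreover have "(\<integral>x. G x * (\<psi>1 x + \<psi>2 x) \<partial>Mw) = (\<integral>x. G x * \<psi>1 x \<partial>Mw) + (\<integral>x. G x * \<psi>2 x \<partial>Mw)"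
    using i2 by (simp add: distrib_left)
  ultimately show ?case by simp
next
  case (lim \<psi> si)
  have fb: "\<bar>f (x + s)\<bar> \<le> C" for x s using f0[of "x+s"] fC[of "x+s"] by simp
  have Gb: "\<bar>G x\<bar> \<le> C" for x using G0[of x] GC[of x] by simp
  have conv: "(\<lambda>i. \<integral>x. \<bar>si i x - \<psi> x\<bar> \<partial>Mw) \<longlonglongrightarrow> (\<integral>x. 0 \<partial>Mw)"
  proof (rule integral_dominated_convergence[where w="\<lambda>x. 3 * \<bar>\<psi> x\<bar>"])
    show "(\<lambda>x. 0::real) \<in> borel_measurable Mw" by simp
    show "(\<lambda>x. \<bar>si i x - \<psi> x\<bar>) \<in> borel_measurable Mw" for i using lim(1)[of i] lim(5) by auto
    show "integrable Mw (\<lambda>x. 3 * \<bar>\<psi> x\<bar>)" using lim(5) by auto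
    show "AE x in Mw. (\<lambda>i. \<bar>si i x - \<psi> x\<bar>) \<longlonglongrightarrow> 0"
    proof (rule AE_I2)
      fix x assume x: "x \<in> space Mw"
      have "(\<lambda>i. si i x - \<psi> x) \<longlonglongrightarrow> \<psi> x - \<psi> x" by (intro tendsto_diff lim(3)[OF x] tendsto_const)
      then have "(\<lambda>i. \<bar>si i x - \<psi> x\<bar>) \<longlonglongrightarrow> \<bar>\<psi> x - \<psi> x\<bar>" by (rule tendsto_rabs)
      then show "(\<lambda>i. \<bar>si i x - \<psi> x\<bar>) \<longlonglongrightarrow> 0" by simp
    qed
    show "AE x in Mw. norm \<bar>si i x - \<psi> x\<bar> \<le> 3 * \<bar>\<psi> x\<bar>" for i
    proof (rule AE_I2)
      fix x assume "x \<in> space Mw"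
      then have "\<bar>si i x\<bar> \<le> 2 * \<bar>\<psi> x\<bar>" using lim(4)[of x i] by simp
      then show "norm \<bar>si i x - \<psi> x\<bar> \<le> 3 * \<bar>\<psi> x\<bar>" by simp
    qed
  qed
  show ?case
  proof (rule approx_tendsto)
    fix e :: real assume e: "e > 0"
    have "e / (C + 1) > 0" using e C_nonneg by simp
    with conv obtain i where i: "\<bar>(\<integral>x. \<bar>si i x - \<psi> x\<bar> \<partial>Mw)\<bar> < e / (C + 1)"
      using LIMSEQ_D[OF conv \<open>e / (C + 1) > 0\<close>] by auto
    have small: "C * (\<integral>x. \<bar>\<psi> x - si i x\<bar> \<partial>Mw) \<le> e"
    proof -
      have "(\<integral>x. \<bar>\<psi> x - si i x\<bar> \<partial>Mw) = (\<integral>x. \<bar>si i x - \<psi> x\<bar> \<partial>Mw)" by (simp add: abs_minus_commute)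
      then have "(\<integral>x. \<bar>\<psi> x - si i x\<bar> \<partial>Mw) \<le> e / (C + 1)" using i by simp
      then have "C * (\<integral>x. \<bar>\<psi> x - si i x\<bar> \<partial>Mw) \<le> C * (e / (C + 1))" using C_nonneg by (rule mult_left_mono)
      also have "\<dots> \<le> e" using C_nonneg e by (simp add: field_simps)
      finally show ?thesis .
    qed
    show "\<exists>b Lb. (b \<longlongrightarrow> Lb) F \<and> (\<forall>\<^sub>F s in F. \<bar>(\<integral>x. f (x + s) * \<psi> x \<partial>Mw) - b s\<bar> \<le> e) \<and>
        \<bar>(\<integral>x. G x * \<psi> x \<partial>Mw) - Lb\<bar> \<le> e"
    proof (intro exI conjI)
      show "((\<lambda>s. \<integral>x. f (x + s) * si i x \<partial>Mw) \<longlongrightarrow> (\<integral>x. G x * si i x \<partial>Mw)) F" by (rule lim(2))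
      have "\<bar>(\<integral>x. f (x + s) * \<psi> x \<partial>Mw) - (\<integral>x. f (x + s) * si i x \<partial>Mw)\<bar> \<le> e" for s
        using integral_bdd_diff[OF lim(5) lim(1)[of i], of "\<lambda>x. f (x + s)" C] fb small by simp
      then show "\<forall>\<^sub>F s in F. \<bar>(\<integral>x. f (x + s) * \<psi> x \<partial>Mw) - (\<integral>x. f (x + s) * si i x \<partial>Mw)\<bar> \<le> e" by simp
      show "\<bar>(\<integral>x. G x * \<psi> x \<partial>Mw) - (\<integral>x. G x * si i x \<partial>Mw)\<bar> \<le> e"
        using integral_bdd_diff[OF lim(5) lim(1)[of i], of G C] Gb small by simp
    qed
  qed
qed

lemma exists_wstar_nonneg:
  "\<exists>G. G \<in> borel_measurable borel \<and> (\<forall>x. 0 \<le> G x \<and> G x \<le> C) \<and> is_wstar_lim F f G"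
proof -
  obtain G where Gm[measurable]: "G \<in> borel_measurable borel" and G0: "\<And>x. 0 \<le> G x" and GC: "\<And>x. G x \<le> C"
    and GA: "\<And>A. A \<in> sets borel \<Longrightarrow> (\<integral>x. indicator A x * G x \<partial>Mw) = LA F A"
    using G_exists by blast
  have key: "(\<integral>x. H x * (\<phi>0 x * exp x) \<partial>Mw) = (\<integral>x. H x * \<phi>0 x \<partial>lborel)"
    if Hm: "H \<in> borel_measurable borel" and pm: "\<phi>0 \<in> borel_measurable borel" and p0: "\<And>x. x < 0 \<Longrightarrow> \<phi>0 x = 0"
    for H \<phi>0 :: "real \<Rightarrow> real"
  proof -
    have "(\<integral>x. H x * (\<phi>0 x * exp x) \<partial>Mw) = (\<integral>x. erlang_density 0 1 x *\<^sub>R (H x * (\<phi>0 x * exp x)) \<partial>lborel)"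
      unfolding Mw_def by (rule integral_density) (use Hm pm in auto)
    also have "\<dots> = (\<integral>x. H x * \<phi>0 x \<partial>lborel)"
      by (rule Bochner_Integration.integral_cong) (auto simp: e0_eq p0 exp_minus field_simps)
    finally show ?thesis .
  qed
  have "is_wstar_lim F f G"
  proof (rule wstar_borel_I)
    show "Linf_pos G" by (rule Linf_pos_I[where C=C]) (use G0 GC in auto)
    fix \<phi>0 :: "real \<Rightarrow> real"
    assume pm[measurable]: "\<phi>0 \<in> borel_measurable borel" and pi: "integrable lborel \<phi>0" and p0: "\<And>x. x < 0 \<Longrightarrow> \<phi>0 x = 0"
    have "integrable Mw (\<lambda>x. \<phi>0 x * exp x)"
      unfolding Mw_def
    proof (subst integrable_density)
      show "integrable lborel (\<lambda>x. erlang_density 0 1 x *\<^sub>R (\<phi>0 x * exp x))"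
      proof (rule Bochner_Integration.integrable_cong[THEN iffD1, OF refl _ pi])
        show "x \<in> space lborel \<Longrightarrow> \<phi>0 x = erlang_density 0 1 x *\<^sub>R (\<phi>0 x * exp x)" for x
          by (auto simp: e0_eq p0 exp_minus field_simps)
      qed
    qed auto
    from Mw_weak[OF Gm G0 GC GA this]
    have "((\<lambda>s. \<integral>x. f (x + s) * (\<phi>0 x * exp x) \<partial>Mw) \<longlongrightarrow> (\<integral>x. G x * (\<phi>0 x * exp x) \<partial>Mw)) F" .
    moreover have "(\<integral>x. f (x + s) * (\<phi>0 x * exp x) \<partial>Mw) = (\<integral>x. f (x + s) * \<phi>0 x \<partial>lborel)" for s
      by (rule key[OF _ pm p0]) simp
    moreover have "(\<integral>x. G x * (\<phi>0 x * exp x) \<partial>Mw) = (\<integral>x. G x * \<phi>0 x \<partial>lborel)"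
      by (rule key[OF Gm pm p0])
    ultimately show "((\<lambda>s. \<integral>x. f (x + s) * \<phi>0 x \<partial>lborel) \<longlongrightarrow> (\<integral>x. G x * \<phi>0 x \<partial>lborel)) F"
      by simp
  qed (use fm Gm in auto)
  then show ?thesis using Gm G0 GC by blast
qed

end

end

lemma exists_wstar:
  fixes f :: "real \<Rightarrow> real"
  assumes fm[measurable]: "f \<in> borel_measurable borel" and fC: "\<And>x. \<bar>f x\<bar> \<le> C" and U: "ultrafilter_on F"
  shows "\<exists>G. G \<in> borel_measurable borel \<and> (\<forall>x. \<bar>G x\<bar> \<le> C) \<and> is_wstar_lim F f G"
proof -
  define fp where "fp x = max 0 (f x)" for x
  define fn where "fn x = max 0 (- f x)" for x
  have fpm[measurable]: "fp \<in> borel_measurable borel" unfolding fp_def by measurable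
  have fnm[measurable]: "fn \<in> borel_measurable borel" unfolding fn_def by measurable
  obtain Gp where Gp: "Gp \<in> borel_measurable borel" "\<forall>x. 0 \<le> Gp x \<and> Gp x \<le> C" "is_wstar_lim F fp Gp"
    using exists_wstar_nonneg[OF fpm _ _ U, of C] fC by (force simp: fp_def abs_le_iff)
  obtain Gn where Gn: "Gn \<in> borel_measurable borel" "\<forall>x. 0 \<le> Gn x \<and> Gn x \<le> C" "is_wstar_lim F fn Gn"
    using exists_wstar_nonneg[OF fnm _ _ U, of C] fC by (force simp: fn_def abs_le_iff)
  have Gm: "(\<lambda>x. Gp x - Gn x) \<in> borel_measurable borel" using Gp(1) Gn(1) by auto
  have GC: "\<bar>Gp x - Gn x\<bar> \<le> C" for x using Gp(2) Gn(2) by (smt (verit))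
  have "is_wstar_lim F f (\<lambda>x. Gp x - Gn x)"
  proof (rule wstar_borel_I[OF _ fm Gm])
    show "Linf_pos (\<lambda>x. Gp x - Gn x)" by (rule Linf_pos_I[OF Gm]) (use GC in auto)
    fix \<phi>0 :: "real \<Rightarrow> real"
    assume pm[measurable]: "\<phi>0 \<in> borel_measurable borel" and pi: "integrable lborel \<phi>0" and p0: "\<And>x. x < 0 \<Longrightarrow> \<phi>0 x = 0"
    have lp: "((\<lambda>s. \<integral>x. fp (x + s) * \<phi>0 x \<partial>lborel) \<longlongrightarrow> (\<integral>x. Gp x * \<phi>0 x \<partial>lborel)) F"
      by (rule wstar_borel_D[OF Gp(3) fpm Gp(1) pm pi p0])
    have ln: "((\<lambda>s. \<integral>x. fn (x + s) * \<phi>0 x \<partial>lborel) \<longlongrightarrow> (\<integral>x. Gn x * \<phi>0 x \<partial>lborel)) F"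
      by (rule wstar_borel_D[OF Gn(3) fnm Gn(1) pm pi p0])
    have bfp: "\<bar>fp x\<bar> \<le> C" "\<bar>fn x\<bar> \<le> C" for x using fC[of x] by (auto simp: fp_def fn_def abs_le_iff)
    have ip: "integrable lborel (\<lambda>x. fp (x + s) * \<phi>0 x)" "integrable lborel (\<lambda>x. fn (x + s) * \<phi>0 x)" for s
      by (rule integrable_bdd_mult[OF pi], simp, rule bfp)+
    have iG: "integrable lborel (\<lambda>x. Gp x * \<phi>0 x)" "integrable lborel (\<lambda>x. Gn x * \<phi>0 x)"
      by (rule integrable_bdd_mult[OF pi], use Gp Gn in auto)+
    have "((\<lambda>s. (\<integral>x. fp (x + s) * \<phi>0 x \<partial>lborel) - (\<integral>x. fn (x + s) * \<phi>0 x \<partial>lborel)) \<longlongrightarrow>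
        (\<integral>x. Gp x * \<phi>0 x \<partial>lborel) - (\<integral>x. Gn x * \<phi>0 x \<partial>lborel)) F"
      by (rule tendsto_diff[OF lp ln])
    moreover have "(\<integral>x. fp (x + s) * \<phi>0 x \<partial>lborel) - (\<integral>x. fn (x + s) * \<phi>0 x \<partial>lborel) = (\<integral>x. f (x + s) * \<phi>0 x \<partial>lborel)" for s
    proof -
      have "(\<integral>x. fp (x + s) * \<phi>0 x \<partial>lborel) - (\<integral>x. fn (x + s) * \<phi>0 x \<partial>lborel) =
          (\<integral>x. fp (x + s) * \<phi>0 x - fn (x + s) * \<phi>0 x \<partial>lborel)" using ip[of s] by simp
      also have "\<dots> = (\<integral>x. f (x + s) * \<phi>0 x \<partial>lborel)"
        by (rule Bochner_Integration.integral_cong) (auto simp: fp_def fn_def max_def algebra_simps)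
      finally show ?thesis .
    qed
    moreover have "(\<integral>x. Gp x * \<phi>0 x \<partial>lborel) - (\<integral>x. Gn x * \<phi>0 x \<partial>lborel) = (\<integral>x. (Gp x - Gn x) * \<phi>0 x \<partial>lborel)"
      using iG by (simp add: left_diff_distrib)
    ultimately show "((\<lambda>s. \<integral>x. f (x + s) * \<phi>0 x \<partial>lborel) \<longlongrightarrow> (\<integral>x. (Gp x - Gn x) * \<phi>0 x \<partial>lborel)) F"
      by simp
  qed
  then show ?thesis using Gm GC by blast
qed

lemma ind_leb: "(\<lambda>y::real. indicator {a..} y :: real) \<in> borel_measurable lebesgue"
  by (rule measurable_completion, rule borel_measurable_indicator) simp

lemma shiftW:
  fixes g H :: "real \<Rightarrow> real" and d :: real
  assumes W: "is_wstar_lim F g H" and d: "d \<ge> 0"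
  shows "is_wstar_lim (filtermap (\<lambda>s. s + d) F) g (\<lambda>y. H (y + d))"
  unfolding is_wstar_lim_def
proof (intro conjI allI impI)
  from W obtain C where m: "(\<lambda>x. indicator {0..} x * H x) \<in> borel_measurable lebesgue"
      and b: "AE x in lebesgue. x \<in> {0..} \<longrightarrow> \<bar>H x\<bar> \<le> C"
    unfolding is_wstar_lim_def Linf_pos_def set_borel_measurable_def by auto
  have T: "(\<lambda>y. d + 1 * y) \<in> lebesgue \<rightarrow>\<^sub>M lebesgue"
    using lebesgue_affine_measurable[where c= "\<lambda>x::real. 1" and t=d] by simp
  have "(\<lambda>y. indicator {0..} (d + 1 * y) * H (d + 1 * y)) \<in> borel_measurable lebesgue"
    using measurable_compose[OF T m] unfolding comp_def .
  then have "(\<lambda>y. indicator {0..} y * (indicator {0..} (d + 1 * y) * H (d + 1 * y))) \<in> borel_measurable lebesgue"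
    by (rule borel_measurable_times[OF ind_leb])
  moreover have "(\<lambda>y. indicator {0..} y * (indicator {0..} (d + 1 * y) * H (d + 1 * y))) =
      (\<lambda>y. indicator {0..} y *\<^sub>R H (y + d))"
    using d by (auto simp: fun_eq_iff indicator_def add.commute)
  ultimately have m2: "(\<lambda>y. indicator {0..} y *\<^sub>R H (y + d)) \<in> borel_measurable lebesgue" by simp
  have "AE y in lebesgue. y \<in> {0..} \<longrightarrow> \<bar>H (y + d)\<bar> \<le> C"
    using AE_lebesgue_shift[OF b, of d] by eventually_elim (use d in auto)
  with m2 show "Linf_pos (\<lambda>y. H (y + d))" unfolding Linf_pos_def set_borel_measurable_def by blast
  fix \<phi> :: "real \<Rightarrow> real" assume \<phi>: "set_integrable lebesgue {0..} \<phi>"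
  define \<psi> where "\<psi> z = indicator {d..} z * \<phi> (z - d)" for z
  have e\<psi>: "indicator {0..} z *\<^sub>R \<psi> z = indicator {0..} (z - d) *\<^sub>R \<phi> (z - d)" for z
    using d by (auto simp: \<psi>_def indicator_def)
  have "set_integrable lebesgue {0..} \<psi>"
    unfolding set_integrable_def e\<psi>
    using lebesgue_integrable_real_affine[OF \<phi>[unfolded set_integrable_def], of 1 "- d"] by simp
  then have l: "((\<lambda>s. LINT z:{0..}|lebesgue. g (z + s) * \<psi> z) \<longlongrightarrow> (LINT z:{0..}|lebesgue. H z * \<psi> z)) F"
    using W unfolding is_wstar_lim_def by blast
  have tr: "(LINT z:{0..}|lebesgue. K z * \<psi> z) = (LINT y:{0..}|lebesgue. K (y + d) * \<phi> y)" for K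
  proof -
    have "(LINT z:{0..}|lebesgue. K z * \<psi> z) = (\<integral>z. indicator {0..} z *\<^sub>R (K z * \<psi> z) \<partial>lebesgue)"
      by (simp add: set_lebesgue_integral_def)
    also have "\<dots> = \<bar>1\<bar> *\<^sub>R (\<integral>y. indicator {0..} (d + 1 * y) *\<^sub>R (K (d + 1 * y) * \<psi> (d + 1 * y)) \<partial>lebesgue)"
      by (rule lebesgue_integral_real_affine) simp
    also have "(\<lambda>y. indicator {0..} (d + 1 * y) *\<^sub>R (K (d + 1 * y) * \<psi> (d + 1 * y))) =
        (\<lambda>y. indicator {0..} y *\<^sub>R (K (y + d) * \<phi> y))"
      using d by (auto simp: fun_eq_iff \<psi>_def indicator_def add.commute)
    also have "\<bar>1::real\<bar> *\<^sub>R (\<integral>y. indicator {0..} y *\<^sub>R (K (y + d) * \<phi> y) \<partial>lebesgue) = (LINT y:{0..}|lebesgue. K (y + d) * \<phi> y)"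
      by (simp add: set_lebesgue_integral_def)
    finally show ?thesis .
  qed
  have "((\<lambda>s. LINT y:{0..}|lebesgue. g (y + (s + d)) * \<phi> y) \<longlongrightarrow> (LINT y:{0..}|lebesgue. H (y + d) * \<phi> y)) F"
    using l unfolding tr by (simp add: add.assoc add.commute add.left_commute)
  then show "((\<lambda>s. LINT y:{0..}|lebesgue. g (y + s) * \<phi> y) \<longlongrightarrow> (LINT y:{0..}|lebesgue. H (y + d) * \<phi> y))
      (filtermap (\<lambda>s. s + d) F)"
    by (simp add: filterlim_filtermap)
qed

lemma wstar_lim_eq:
  assumes "is_wstar_lim F g G" "F \<noteq> bot"
  shows "AE x in lebesgue. x \<ge> 0 \<longrightarrow> wstar_lim F g x = G x"
proof -
  have "is_wstar_lim F g (wstar_lim F g)" unfolding wstar_lim_def by (rule someI[where P="is_wstar_lim F g", OF assms(1)])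
  from wstar_unique[OF assms(2) this assms(1)] show ?thesis .
qed

definition nc :: "real \<Rightarrow> nat" where "nc x = nat \<lceil>- x\<rceil>"

lemma nc_ge: "real (nc x) + x \<ge> 0"
proof -
  have "- x \<le> of_int \<lceil>- x\<rceil>" by (rule le_of_int_ceiling)
  moreover have "of_int \<lceil>- x\<rceil> \<le> real (nat \<lceil>- x\<rceil>)" by (cases "\<lceil>- x\<rceil> \<ge> 0") auto
  ultimately show ?thesis unfolding nc_def by linarith
qed

lemma nc_le: "x \<ge> - real M \<Longrightarrow> nc x \<le> M"
  unfolding nc_def by (simp add: nat_le_iff ceiling_le_iff)

lemma nc_pos: "x \<ge> 0 \<Longrightarrow> nc x = 0"
  using nc_le[of 0 x] by simp

lemma tau_inv_0: "tau_inv 0 \<eta> = \<eta>"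
  by (simp add: tau_inv_def filtermap_ident)

lemma g_omega_eq: "g_omega \<eta> t g x = wstar_lim (Fw \<eta> t (nc x)) g (real (nc x) + x)"
  by (simp add: g_omega_def nc_pos Let_def Fw_def nc_def tau_inv_0)

lemma g_omega_AE:
  assumes W: "\<And>K. is_wstar_lim (Fw \<eta> t K) g (\<lambda>y. \<Psi> (y - real K))" and U: "ultrafilter_on \<eta>"
  shows "AE x in lebesgue. g_omega \<eta> t g x = \<Psi> x"
proof -
  have "AE x in lebesgue. real K + x \<ge> 0 \<longrightarrow> wstar_lim (Fw \<eta> t K) g (real K + x) = \<Psi> x" for K
  proof -
    have "AE z in lebesgue. z \<ge> 0 \<longrightarrow> wstar_lim (Fw \<eta> t K) g z = \<Psi> (z - real K)"
      by (rule wstar_lim_eq[OF W Fw_nbot[OF U]])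
    from AE_lebesgue_shift[OF this, of "real K"] show ?thesis by (simp add: add.commute)
  qed
  then have "AE x in lebesgue. \<forall>K. real K + x \<ge> 0 \<longrightarrow> wstar_lim (Fw \<eta> t K) g (real K + x) = \<Psi> x"
    by (subst AE_all_countable) auto
  then show ?thesis by eventually_elim (use nc_ge in \<open>auto simp: g_omega_eq\<close>)
qed

lemma nc_borel[measurable]: "Measurable.pred borel (\<lambda>x. nc x = K)"
  unfolding nc_def by measurable

lemma nc_meas: "nc \<in> borel \<rightarrow>\<^sub>M count_space UNIV"
proof (subst measurable_count_space_eq2_countable, safe)
  fix a :: nat
  have "nc -` {a} \<inter> space borel = {x. nc x = a}" by auto
  also have "\<dots> \<in> sets borel" using nc_borel[of a] by measurable
  finally show "nc -` {a} \<inter> space borel \<in> sets borel" .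
qed simp

definition Bf :: "nat filter \<Rightarrow> real \<Rightarrow> (real \<Rightarrow> real) \<Rightarrow> real \<Rightarrow> nat \<Rightarrow> real \<Rightarrow> real" where
  "Bf \<eta> t f C M = (SOME G. G \<in> borel_measurable borel \<and> (\<forall>x. \<bar>G x\<bar> \<le> C) \<and> is_wstar_lim (Fw \<eta> t M) f G)"

definition Gf :: "nat filter \<Rightarrow> real \<Rightarrow> (real \<Rightarrow> real) \<Rightarrow> real \<Rightarrow> real \<Rightarrow> real" where
  "Gf \<eta> t f C x = Bf \<eta> t f C (nc x) (real (nc x) + x)"

context
  fixes \<eta> :: "nat filter" and t :: real and f :: "real \<Rightarrow> real" and C :: real
  assumes U: "ultrafilter_on \<eta>" and cof: "\<eta> \<le> cofinite"
    and fm[measurable]: "f \<in> borel_measurable borel" and fC: "\<And>x. \<bar>f x\<bar> \<le> C"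
begin

lemma Bf_prop: "Bf \<eta> t f C M \<in> borel_measurable borel" "\<And>x. \<bar>Bf \<eta> t f C M x\<bar> \<le> C"
  "is_wstar_lim (Fw \<eta> t M) f (Bf \<eta> t f C M)"
proof -
  have "\<exists>G. G \<in> borel_measurable borel \<and> (\<forall>x. \<bar>G x\<bar> \<le> C) \<and> is_wstar_lim (Fw \<eta> t M) f G"
    by (rule exists_wstar[OF fm fC Fw_ultra[OF U]])
  then have "Bf \<eta> t f C M \<in> borel_measurable borel \<and> (\<forall>x. \<bar>Bf \<eta> t f C M x\<bar> \<le> C) \<and> is_wstar_lim (Fw \<eta> t M) f (Bf \<eta> t f C M)"
    unfolding Bf_def by (rule someI_ex)
  then show "Bf \<eta> t f C M \<in> borel_measurable borel" "\<And>x. \<bar>Bf \<eta> t f C M x\<bar> \<le> C"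
    "is_wstar_lim (Fw \<eta> t M) f (Bf \<eta> t f C M)" by auto
qed

lemma Gf_borel[measurable]: "Gf \<eta> t f C \<in> borel_measurable borel"
proof -
  have "(\<lambda>x. (\<lambda>K x. Bf \<eta> t f C K (real K + x)) (nc x) x) \<in> borel_measurable borel"
  proof (rule measurable_compose_countable'[OF _ nc_meas])
    fix K :: nat
    have [measurable]: "Bf \<eta> t f C K \<in> borel_measurable borel" by (rule Bf_prop)
    show "(\<lambda>x. Bf \<eta> t f C K (real K + x)) \<in> borel_measurable borel" by measurable
  qed simp
  then show ?thesis unfolding Gf_def[abs_def] by simp
qed

lemma Gf_bound: "\<bar>Gf \<eta> t f C x\<bar> \<le> C"
  unfolding Gf_def by (rule Bf_prop)

lemma Bf_shift: "AE z in lebesgue. z \<ge> 0 \<longrightarrow> Bf \<eta> t f C K z = Bf \<eta> t f C (K + D) (z + real D)"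
proof -
  have "is_wstar_lim (filtermap (\<lambda>s. s + real D) (Fw \<eta> t (K + D))) f (\<lambda>z. Bf \<eta> t f C (K + D) (z + real D))"
    by (rule shiftW[OF Bf_prop(3)]) simp
  then have W: "is_wstar_lim (Fw \<eta> t K) f (\<lambda>z. Bf \<eta> t f C (K + D) (z + real D))"
    using Fw_shift[OF cof, of t K D] by simp
  show ?thesis by (rule wstar_unique[OF Fw_nbot[OF U] Bf_prop(3) W])
qed

lemma Gf_H: "AE y in lebesgue. y \<ge> 0 \<longrightarrow> Bf \<eta> t f C M y = Gf \<eta> t f C (y - real M)"
proof -
  have "AE y in lebesgue. K \<le> M \<longrightarrow> y - real (M - K) \<ge> 0 \<longrightarrow> Bf \<eta> t f C K (y - real (M - K)) = Bf \<eta> t f C M y" for K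
  proof (cases "K \<le> M")
    case True
    have "AE z in lebesgue. z \<ge> 0 \<longrightarrow> Bf \<eta> t f C K z = Bf \<eta> t f C (K + (M - K)) (z + real (M - K))"
      by (rule Bf_shift)
    from AE_lebesgue_shift[OF this, of "- real (M - K)"] True show ?thesis
      by eventually_elim (simp add: of_nat_diff algebra_simps)
  qed simp
  then have "AE y in lebesgue. \<forall>K. K \<le> M \<longrightarrow> y - real (M - K) \<ge> 0 \<longrightarrow> Bf \<eta> t f C K (y - real (M - K)) = Bf \<eta> t f C M y"
    by (subst AE_all_countable) auto
  then show ?thesis
  proof eventually_elim
    case (elim y)
    show ?case
    proof
      assume y: "y \<ge> 0"
      define K where "K = nc (y - real M)"
      have KM: "K \<le> M" unfolding K_def by (rule nc_le) (use y in simp)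
      have "real K + (y - real M) \<ge> 0" unfolding K_def by (rule nc_ge)
      moreover have "y - real (M - K) = real K + (y - real M)" using KM by (simp add: of_nat_diff)
      ultimately have "Bf \<eta> t f C K (real K + (y - real M)) = Bf \<eta> t f C M y"
      proof -
        have "real M - real K \<le> y" using \<open>real K + (y - real M) \<ge> 0\<close> by simp
        then have "Bf \<eta> t f C K (y - (real M - real K)) = Bf \<eta> t f C M y" using elim KM by (simp add: of_nat_diff)
        moreover have "y - (real M - real K) = real K + (y - real M)" by simp
        ultimately show ?thesis by simp
      qed
      then show "Bf \<eta> t f C M y = Gf \<eta> t f C (y - real M)"
        by (simp add: Gf_def K_def[symmetric])
    qed
  qed
qed

lemma Gf_wstar: "is_wstar_lim (Fw \<eta> t M) f (\<lambda>y. Gf \<eta> t f C (y - real M))"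
proof (rule wstar_cong[OF Bf_prop(3)])
  show "Linf_pos (\<lambda>y. Gf \<eta> t f C (y - real M))" by (rule Linf_pos_I[where C=C]) (auto simp: Gf_bound)
  show "AE x in lebesgue. 0 \<le> x \<longrightarrow> Bf \<eta> t f C M x = Gf \<eta> t f C (x - real M)" by (rule Gf_H)
qed

lemma g_omega_Gf: "AE x in lebesgue. g_omega \<eta> t f x = Gf \<eta> t f C x"
  by (rule g_omega_AE[OF Gf_wstar U])

end

context
  fixes \<eta> :: "nat filter" and t :: real and f :: "real \<Rightarrow> real" and C :: real
  assumes U: "ultrafilter_on \<eta>" and cof: "\<eta> \<le> cofinite"
    and fm[measurable]: "f \<in> borel_measurable borel" and fC: "\<And>x. \<bar>f x\<bar> \<le> C"
    and fneg: "\<And>x. x < 0 \<Longrightarrow> f x = 0"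
begin

lemma C0: "0 \<le> C" using fC[of 0] by simp

lemma claimL_supp:
  assumes pm[measurable]: "\<psi> \<in> borel_measurable borel" and pi: "integrable lborel \<psi>"
    and ps: "\<And>w. w < - real D \<Longrightarrow> \<psi> w = 0"
  shows "((\<lambda>s. \<integral>w. f (w + s) * \<psi> w \<partial>lborel) \<longlongrightarrow> (\<integral>w. Gf \<eta> t f C (w - real N) * \<psi> w \<partial>lborel)) (Fw \<eta> t N)"
proof -
  define \<phi>0 where "\<phi>0 z = \<psi> (z - real D)" for z
  have p0m[measurable]: "\<phi>0 \<in> borel_measurable borel" unfolding \<phi>0_def by measurable
  have p0i: "integrable lborel \<phi>0"
    using lborel_integrable_real_affine[OF pi, of 1 "- real D"] unfolding \<phi>0_def by (simp add: algebra_simps)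
  have p00: "\<phi>0 z = 0" if "z < 0" for z unfolding \<phi>0_def by (rule ps) (use that in simp)
  have l: "((\<lambda>s. \<integral>z. f (z + s) * \<phi>0 z \<partial>lborel) \<longlongrightarrow> (\<integral>z. Gf \<eta> t f C (z - real (N + D)) * \<phi>0 z \<partial>lborel)) (Fw \<eta> t (N + D))"
  proof (rule wstar_borel_D[OF Gf_wstar[OF U cof fm fC] fm _ p0m p0i p00])
    show "(\<lambda>y. Gf \<eta> t f C (y - real (N + D))) \<in> borel_measurable borel"
      using Gf_borel[OF U cof fm fC] by measurable
  qed
  have tr: "(\<integral>z. h z * \<phi>0 z \<partial>lborel) = (\<integral>w. h (w + real D) * \<psi> w \<partial>lborel)" for h :: "real \<Rightarrow> real"
    using lborel_integral_real_affine[of 1 "\<lambda>z. h z * \<phi>0 z" "real D"] unfolding \<phi>0_def by (simp add: add.commute)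
  have "((\<lambda>s. \<integral>w. f (w + (s + real D)) * \<psi> w \<partial>lborel) \<longlongrightarrow> (\<integral>w. Gf \<eta> t f C (w - real N) * \<psi> w \<partial>lborel)) (Fw \<eta> t (N + D))"
    using l unfolding tr by (simp add: algebra_simps)
  then show ?thesis
    using Fw_shift[OF cof, of t N D] by (simp add: filterlim_filtermap)
qed

lemma claimL:
  assumes pm[measurable]: "\<psi> \<in> borel_measurable borel" and pi: "integrable lborel \<psi>"
  shows "((\<lambda>s. \<integral>w. f (w + s) * \<psi> w \<partial>lborel) \<longlongrightarrow> (\<integral>w. Gf \<eta> t f C (w - real N) * \<psi> w \<partial>lborel)) (Fw \<eta> t N)"
proof (rule approx_tendsto)
  fix e :: real assume e: "e > 0"
  define \<psi>D where "\<psi>D D w = indicator {- real D..} w * \<psi> w" for D :: nat and w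
  have \<psi>Dm[measurable]: "\<psi>D D \<in> borel_measurable borel" for D unfolding \<psi>D_def by measurable
  have \<psi>Di: "integrable lborel (\<psi>D D)" for D unfolding \<psi>D_def
    by (rule integrable_bdd_mult[OF pi]) (auto simp: indicator_def)
  have conv: "(\<lambda>D. \<integral>w. \<bar>\<psi> w - \<psi>D D w\<bar> \<partial>lborel) \<longlonglongrightarrow> (\<integral>w. 0 \<partial>(lborel::real measure))"
  proof (rule integral_dominated_convergence[where w="\<lambda>x. \<bar>\<psi> x\<bar>" and s="\<lambda>D w. \<bar>\<psi> w - \<psi>D D w\<bar>"])
    show "(\<lambda>w. 0::real) \<in> borel_measurable lborel" by simp
    show "(\<lambda>w. \<bar>\<psi> w - \<psi>D D w\<bar>) \<in> borel_measurable lborel" for D by simp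
    show "integrable lborel (\<lambda>w. \<bar>\<psi> w\<bar>)" using pi by simp
    show "AE w in lborel. (\<lambda>D. \<bar>\<psi> w - \<psi>D D w\<bar>) \<longlonglongrightarrow> 0"
    proof (rule AE_I2)
      fix w :: real
      obtain M :: nat where M: "- w \<le> real M" using real_arch_simple by blast
      have "\<forall>\<^sub>F D in sequentially. \<bar>\<psi> w - \<psi>D D w\<bar> = 0"
        using eventually_ge_at_top[of M]
        by eventually_elim (use M in \<open>auto simp: \<psi>D_def indicator_def\<close>)
      then show "(\<lambda>D. \<bar>\<psi> w - \<psi>D D w\<bar>) \<longlonglongrightarrow> 0" by (rule tendsto_eventually)
    qed
    show "AE w in lborel. norm \<bar>\<psi> w - \<psi>D D w\<bar> \<le> \<bar>\<psi> w\<bar>" for D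
      by (rule AE_I2) (auto simp: \<psi>D_def indicator_def)
  qed
  have "e / (C + 1) > 0" using e C0 by simp
  then obtain D where D: "\<bar>(\<integral>w. \<bar>\<psi> w - \<psi>D D w\<bar> \<partial>lborel)\<bar> < e / (C + 1)"
    using LIMSEQ_D[OF conv] by auto
  have small: "C * (\<integral>w. \<bar>\<psi> w - \<psi>D D w\<bar> \<partial>lborel) \<le> e"
  proof -
    have "(\<integral>w. \<bar>\<psi> w - \<psi>D D w\<bar> \<partial>lborel) \<le> e / (C + 1)" using D by simp
    then have "C * (\<integral>w. \<bar>\<psi> w - \<psi>D D w\<bar> \<partial>lborel) \<le> C * (e / (C + 1))" using C0 by (rule mult_left_mono)
    also have "\<dots> \<le> e" using C0 e by (simp add: field_simps)
    finally show ?thesis .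
  qed
  have GfN[measurable]: "(\<lambda>w. Gf \<eta> t f C (w - real N)) \<in> borel_measurable borel"
    using Gf_borel[OF U cof fm fC] by measurable
  show "\<exists>b Lb. (b \<longlongrightarrow> Lb) (Fw \<eta> t N) \<and>
      (\<forall>\<^sub>F s in Fw \<eta> t N. \<bar>(\<integral>w. f (w + s) * \<psi> w \<partial>lborel) - b s\<bar> \<le> e) \<and>
      \<bar>(\<integral>w. Gf \<eta> t f C (w - real N) * \<psi> w \<partial>lborel) - Lb\<bar> \<le> e"
  proof (intro exI conjI)
    show "((\<lambda>s. \<integral>w. f (w + s) * \<psi>D D w \<partial>lborel) \<longlongrightarrow> (\<integral>w. Gf \<eta> t f C (w - real N) * \<psi>D D w \<partial>lborel)) (Fw \<eta> t N)"
      by (rule claimL_supp[OF \<psi>Dm \<psi>Di, of D]) (simp add: \<psi>D_def)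
    have "\<bar>(\<integral>w. f (w + s) * \<psi> w \<partial>lborel) - (\<integral>w. f (w + s) * \<psi>D D w \<partial>lborel)\<bar> \<le> e" for s
      by (rule order_trans[OF integral_bdd_diff[OF pi \<psi>Di[of D]] small]) (auto simp: fC)
    then show "\<forall>\<^sub>F s in Fw \<eta> t N. \<bar>(\<integral>w. f (w + s) * \<psi> w \<partial>lborel) - (\<integral>w. f (w + s) * \<psi>D D w \<partial>lborel)\<bar> \<le> e"
      by simp
    show "\<bar>(\<integral>w. Gf \<eta> t f C (w - real N) * \<psi> w \<partial>lborel) - (\<integral>w. Gf \<eta> t f C (w - real N) * \<psi>D D w \<partial>lborel)\<bar> \<le> e"
      by (rule order_trans[OF integral_bdd_diff[OF pi \<psi>Di[of D]] small]) (auto simp: Gf_bound[OF U cof fm fC])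
  qed
qed

end

context
  fixes k \<phi> :: "real \<Rightarrow> real"
  assumes km[measurable]: "k \<in> borel_measurable borel" and ki: "integrable lborel k"
    and pm[measurable]: "\<phi> \<in> borel_measurable borel" and pi: "integrable lborel \<phi>"
begin

lemma int_u_first:
  fixes B :: "real \<Rightarrow> real"
  assumes Bm[measurable]: "B \<in> borel_measurable borel" and Bb: "\<And>x. \<bar>B x\<bar> \<le> K0"
  shows "integrable (lborel \<Otimes>\<^sub>M lborel) (\<lambda>(u, w). B w * k u * \<phi> (w + u))"
proof (rule lborel_pair.Fubini_integrable)
  show "(\<lambda>(u, w). B w * k u * \<phi> (w + u)) \<in> borel_measurable (lborel \<Otimes>\<^sub>M lborel)" by measurable
  have pu: "integrable lborel (\<lambda>w. \<phi> (w + u))" for u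
    using lborel_integrable_real_affine[OF pi, of 1 u] by (simp add: add.commute)
  have nrm: "(\<integral>w. \<bar>\<phi> (w + u)\<bar> \<partial>lborel) = (\<integral>w. \<bar>\<phi> w\<bar> \<partial>lborel)" for u
    using lborel_integral_real_affine[of 1 "\<lambda>w. \<bar>\<phi> w\<bar>" u] by (simp add: add.commute)
  have K0: "0 \<le> K0" using Bb[of 0] by simp
  show "integrable lborel (\<lambda>u. \<integral>w. norm ((\<lambda>(u, w). B w * k u * \<phi> (w + u)) (u, w)) \<partial>lborel)"
  proof (rule Bochner_Integration.integrable_bound[of _ "\<lambda>u. K0 * (\<integral>w. \<bar>\<phi> w\<bar> \<partial>lborel) * k u"])
    show "integrable lborel (\<lambda>u. K0 * (\<integral>w. \<bar>\<phi> w\<bar> \<partial>lborel) * k u)" using ki by simp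
    show "(\<lambda>u. \<integral>w. norm ((\<lambda>(u, w). B w * k u * \<phi> (w + u)) (u, w)) \<partial>lborel) \<in> borel_measurable lborel"
      by measurable
    show "AE u in lborel. norm (\<integral>w. norm ((\<lambda>(u, w). B w * k u * \<phi> (w + u)) (u, w)) \<partial>lborel)
        \<le> norm (K0 * (\<integral>w. \<bar>\<phi> w\<bar> \<partial>lborel) * k u)"
    proof (rule AE_I2)
      fix u :: real
      have "(\<integral>w. norm (B w * k u * \<phi> (w + u)) \<partial>lborel) \<le> (\<integral>w. K0 * \<bar>k u\<bar> * \<bar>\<phi> (w + u)\<bar> \<partial>lborel)"
      proof (rule integral_mono)
        show "integrable lborel (\<lambda>w. norm (B w * k u * \<phi> (w + u)))"
          by (intro integrable_norm) (rule integrable_bdd_mult[OF pu, of "\<lambda>w. B w * k u" "K0 * \<bar>k u\<bar>"], auto simp: abs_mult intro!: mult_right_mono Bb)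
        show "integrable lborel (\<lambda>w. K0 * \<bar>k u\<bar> * \<bar>\<phi> (w + u)\<bar>)" using pu by auto
        show "norm (B w * k u * \<phi> (w + u)) \<le> K0 * \<bar>k u\<bar> * \<bar>\<phi> (w + u)\<bar>" for w
          using Bb[of w] by (auto simp: abs_mult intro!: mult_right_mono)
      qed
      also have "\<dots> = K0 * \<bar>k u\<bar> * (\<integral>w. \<bar>\<phi> w\<bar> \<partial>lborel)" using nrm[of u] by simp
      finally have "(\<integral>w. norm (B w * k u * \<phi> (w + u)) \<partial>lborel) \<le> K0 * \<bar>k u\<bar> * (\<integral>w. \<bar>\<phi> w\<bar> \<partial>lborel)" .
      moreover have "0 \<le> (\<integral>w. norm (B w * k u * \<phi> (w + u)) \<partial>lborel)" by simp
      ultimately show "norm (\<integral>w. norm ((\<lambda>(u, w). B w * k u * \<phi> (w + u)) (u, w)) \<partial>lborel)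
        \<le> norm (K0 * (\<integral>w. \<bar>\<phi> w\<bar> \<partial>lborel) * k u)"
        using K0 by (simp add: abs_mult mult_ac)
    qed
  qed
  show "AE u in lborel. integrable lborel (\<lambda>w. (\<lambda>(u, w). B w * k u * \<phi> (w + u)) (u, w))"
  proof (rule AE_I2)
    fix u
    show "integrable lborel (\<lambda>w. (\<lambda>(u, w). B w * k u * \<phi> (w + u)) (u, w))"
      by simp (rule integrable_bdd_mult[OF pu[of u], of "\<lambda>w. B w * k u" "K0 * \<bar>k u\<bar>"], auto simp: abs_mult intro!: mult_right_mono Bb)
  qed
qed

lemma int_y_first:
  fixes B :: "real \<Rightarrow> real"
  assumes Bm[measurable]: "B \<in> borel_measurable borel" and Bb: "\<And>x. \<bar>B x\<bar> \<le> K0"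
  shows "integrable (lborel \<Otimes>\<^sub>M lborel) (\<lambda>(y, u). B (y - u) * k u * \<phi> y)"
proof (rule lborel_pair.Fubini_integrable)
  show "(\<lambda>(y, u). B (y - u) * k u * \<phi> y) \<in> borel_measurable (lborel \<Otimes>\<^sub>M lborel)" by measurable
  have K0: "0 \<le> K0" using Bb[of 0] by simp
  have iu: "integrable lborel (\<lambda>u. B (y - u) * k u * \<phi> y)" for y
  proof -
    have "integrable lborel (\<lambda>u. (B (y - u) * \<phi> y) * k u)"
      by (rule integrable_bdd_mult[OF ki, of _ "K0 * \<bar>\<phi> y\<bar>"]) (auto simp: abs_mult intro!: mult_right_mono Bb)
    then show ?thesis by (simp add: mult_ac)
  qed
  show "integrable lborel (\<lambda>y. \<integral>u. norm ((\<lambda>(y, u). B (y - u) * k u * \<phi> y) (y, u)) \<partial>lborel)"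
  proof (rule Bochner_Integration.integrable_bound[of _ "\<lambda>y. K0 * (\<integral>u. \<bar>k u\<bar> \<partial>lborel) * \<phi> y"])
    show "integrable lborel (\<lambda>y. K0 * (\<integral>u. \<bar>k u\<bar> \<partial>lborel) * \<phi> y)" using pi by simp
    show "(\<lambda>y. \<integral>u. norm ((\<lambda>(y, u). B (y - u) * k u * \<phi> y) (y, u)) \<partial>lborel) \<in> borel_measurable lborel"
      by measurable
    show "AE y in lborel. norm (\<integral>u. norm ((\<lambda>(y, u). B (y - u) * k u * \<phi> y) (y, u)) \<partial>lborel)
        \<le> norm (K0 * (\<integral>u. \<bar>k u\<bar> \<partial>lborel) * \<phi> y)"
    proof (rule AE_I2)
      fix y :: real
      have "(\<integral>u. norm (B (y - u) * k u * \<phi> y) \<partial>lborel) \<le> (\<integral>u. K0 * \<bar>\<phi> y\<bar> * \<bar>k u\<bar> \<partial>lborel)"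
      proof (rule integral_mono)
        show "integrable lborel (\<lambda>u. norm (B (y - u) * k u * \<phi> y))" using iu[of y] by (rule integrable_norm)
        show "integrable lborel (\<lambda>u. K0 * \<bar>\<phi> y\<bar> * \<bar>k u\<bar>)" using ki by auto
        show "norm (B (y - u) * k u * \<phi> y) \<le> K0 * \<bar>\<phi> y\<bar> * \<bar>k u\<bar>" for u
        proof -
          have "\<bar>\<phi> y\<bar> * \<bar>k u\<bar> * \<bar>B (y - u)\<bar> \<le> \<bar>\<phi> y\<bar> * \<bar>k u\<bar> * K0"
            by (rule mult_left_mono) (auto simp: Bb)
          then show ?thesis by (simp add: abs_mult mult_ac)
        qed
      qed
      also have "\<dots> = K0 * \<bar>\<phi> y\<bar> * (\<integral>u. \<bar>k u\<bar> \<partial>lborel)" by simp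
      finally have "(\<integral>u. norm (B (y - u) * k u * \<phi> y) \<partial>lborel) \<le> K0 * \<bar>\<phi> y\<bar> * (\<integral>u. \<bar>k u\<bar> \<partial>lborel)" .
      moreover have "0 \<le> (\<integral>u. norm (B (y - u) * k u * \<phi> y) \<partial>lborel)" by simp
      moreover have "0 \<le> (\<integral>u. \<bar>k u\<bar> \<partial>lborel)" by simp
      ultimately show "norm (\<integral>u. norm ((\<lambda>(y, u). B (y - u) * k u * \<phi> y) (y, u)) \<partial>lborel)
        \<le> norm (K0 * (\<integral>u. \<bar>k u\<bar> \<partial>lborel) * \<phi> y)"
        using K0 by (simp add: abs_mult mult_ac)
    qed
  qed
  show "AE y in lborel. integrable lborel (\<lambda>u. (\<lambda>(y, u). B (y - u) * k u * \<phi> y) (y, u))"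
    by (rule AE_I2) (use iu in simp)
qed

definition psiK :: "real \<Rightarrow> real" where
  "psiK w = (\<integral>u. k u * \<phi> (w + u) \<partial>lborel)"

lemma psiK_borel[measurable]: "psiK \<in> borel_measurable borel"
proof -
  have "(\<lambda>w. \<integral>u. k u * \<phi> (w + u) \<partial>lborel) \<in> borel_measurable lborel"
    by measurable
  then show ?thesis unfolding psiK_def[abs_def] by simp
qed

lemma psiK_int: "integrable lborel psiK"
proof -
  have "integrable (lborel \<Otimes>\<^sub>M lborel) (\<lambda>(u, w). (\<lambda>x. 1) w * k u * \<phi> (w + u))"
    by (rule int_u_first[of "\<lambda>x. 1" 1]) auto
  then have "integrable (lborel \<Otimes>\<^sub>M lborel) (\<lambda>(x, y). (\<lambda>(u, w). k u * \<phi> (w + u)) (y, x))"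
    by (intro lborel_pair.integrable_product_swap) simp
  then have "integrable (lborel \<Otimes>\<^sub>M lborel) (\<lambda>(w, u). k u * \<phi> (w + u))"
    by (simp add: case_prod_beta)
  from lborel_pair.integrable_fst'[OF this] show ?thesis unfolding psiK_def[abs_def] by simp
qed

lemma conv_fubini:
  fixes B :: "real \<Rightarrow> real"
  assumes Bm[measurable]: "B \<in> borel_measurable borel" and Bb: "\<And>x. \<bar>B x\<bar> \<le> K0"
  shows "(\<integral>y. (\<integral>u. B (y - u) * k u \<partial>lborel) * \<phi> y \<partial>lborel) = (\<integral>w. B w * psiK w \<partial>lborel)"
proof -
  have i1: "integrable (lborel \<Otimes>\<^sub>M lborel) (\<lambda>(y, u). B (y - u) * k u * \<phi> y)" by (rule int_y_first[OF Bm Bb])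
  have i2: "integrable (lborel \<Otimes>\<^sub>M lborel) (\<lambda>(u, w). B w * k u * \<phi> (w + u))" by (rule int_u_first[OF Bm Bb])
  have "(\<integral>y. (\<integral>u. B (y - u) * k u \<partial>lborel) * \<phi> y \<partial>lborel) = (\<integral>y. (\<integral>u. B (y - u) * k u * \<phi> y \<partial>lborel) \<partial>lborel)"
    by simp
  also have "\<dots> = (\<integral>u. (\<integral>y. B (y - u) * k u * \<phi> y \<partial>lborel) \<partial>lborel)"
    using lborel_pair.Fubini_integral[of "\<lambda>y u. B (y - u) * k u * \<phi> y"] i1 by simp
  also have "\<dots> = (\<integral>u. (\<integral>w. B w * k u * \<phi> (w + u) \<partial>lborel) \<partial>lborel)"
  proof (rule Bochner_Integration.integral_cong[OF refl])
    fix u :: real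
    show "(\<integral>y. B (y - u) * k u * \<phi> y \<partial>lborel) = (\<integral>w. B w * k u * \<phi> (w + u) \<partial>lborel)"
      using lborel_integral_real_affine[of 1 "\<lambda>y. B (y - u) * k u * \<phi> y" u] by (simp add: add.commute)
  qed
  also have "\<dots> = (\<integral>w. (\<integral>u. B w * k u * \<phi> (w + u) \<partial>lborel) \<partial>lborel)"
    using lborel_pair.Fubini_integral[of "\<lambda>u w. B w * k u * \<phi> (w + u)"] i2 by simp
  also have "\<dots> = (\<integral>w. B w * psiK w \<partial>lborel)"
    unfolding psiK_def by (simp add: mult.assoc)
  finally show ?thesis .
qed

end

definition Kop :: "(real \<Rightarrow> real) \<Rightarrow> (real \<Rightarrow> real) \<Rightarrow> real \<Rightarrow> real" where
  "Kop k g x = (\<integral>u. g (x - u) * k u \<partial>lborel)"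

lemma Kop_borel[measurable]:
  assumes [measurable]: "k \<in> borel_measurable borel" "g \<in> borel_measurable borel"
  shows "Kop k g \<in> borel_measurable borel"
proof -
  have "(\<lambda>x. \<integral>u. g (x - u) * k u \<partial>lborel) \<in> borel_measurable lborel" by measurable
  then show ?thesis unfolding Kop_def[abs_def] by simp
qed

lemma Kop_bound:
  assumes km[measurable]: "k \<in> borel_measurable borel" and ki: "integrable lborel k"
    and gm[measurable]: "g \<in> borel_measurable borel" and gC: "\<And>x. \<bar>g x\<bar> \<le> C"
  shows "\<bar>Kop k g x\<bar> \<le> C * (\<integral>u. \<bar>k u\<bar> \<partial>lborel)"
proof -
  have i: "integrable lborel (\<lambda>u. g (x - u) * k u)"
    by (rule integrable_bdd_mult[OF ki, of _ C]) (auto simp: gC)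
  have "\<bar>Kop k g x\<bar> \<le> (\<integral>u. \<bar>g (x - u) * k u\<bar> \<partial>lborel)"
    unfolding Kop_def using Bochner_Integration.integral_norm_bound[of lborel "\<lambda>u. g (x - u) * k u"] by simp
  also have "\<dots> \<le> (\<integral>u. C * \<bar>k u\<bar> \<partial>lborel)"
  proof (rule integral_mono)
    show "integrable lborel (\<lambda>u. \<bar>g (x - u) * k u\<bar>)" using i by (rule integrable_abs)
    show "integrable lborel (\<lambda>u. C * \<bar>k u\<bar>)" using ki by simp
    show "\<bar>g (x - u) * k u\<bar> \<le> C * \<bar>k u\<bar>" for u using gC[of "x - u"] by (auto simp: abs_mult intro!: mult_right_mono)
  qed
  also have "\<dots> = C * (\<integral>u. \<bar>k u\<bar> \<partial>lborel)" by simp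
  finally show ?thesis .
qed

context
  fixes \<eta> :: "nat filter" and t :: real and f :: "real \<Rightarrow> real" and C :: real and k :: "real \<Rightarrow> real"
  assumes U: "ultrafilter_on \<eta>" and cof: "\<eta> \<le> cofinite"
    and fm[measurable]: "f \<in> borel_measurable borel" and fC: "\<And>x. \<bar>f x\<bar> \<le> C"
    and fneg: "\<And>x. x < 0 \<Longrightarrow> f x = 0"
    and km[measurable]: "k \<in> borel_measurable borel" and ki: "integrable lborel k"
begin

lemma Gfm[measurable]: "Gf \<eta> t f C \<in> borel_measurable borel"
  by (rule Gf_borel[OF U cof fm fC])

lemma Kf_wstar: "is_wstar_lim (Fw \<eta> t N) (Kop k f) (\<lambda>y. Kop k (Gf \<eta> t f C) (y - real N))"
proof (rule wstar_borel_I)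
  show "Linf_pos (\<lambda>y. Kop k (Gf \<eta> t f C) (y - real N))"
  proof (rule Linf_pos_I[where C="C * (\<integral>u. \<bar>k u\<bar> \<partial>lborel)"])
    show "(\<lambda>y. Kop k (Gf \<eta> t f C) (y - real N)) \<in> borel_measurable borel" by measurable
    show "AE x in lebesgue. 0 \<le> x \<longrightarrow> \<bar>Kop k (Gf \<eta> t f C) (x - real N)\<bar> \<le> C * (\<integral>u. \<bar>k u\<bar> \<partial>lborel)"
      by (rule AE_I2) (use Kop_bound[OF km ki Gfm Gf_bound[OF U cof fm fC]] in auto)
  qed
  show "Kop k f \<in> borel_measurable borel" by measurable
  show "(\<lambda>y. Kop k (Gf \<eta> t f C) (y - real N)) \<in> borel_measurable borel" by measurable
  fix \<phi>0 :: "real \<Rightarrow> real"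
  assume pm[measurable]: "\<phi>0 \<in> borel_measurable borel" and pi: "integrable lborel \<phi>0"
    and p0: "\<And>x. x < 0 \<Longrightarrow> \<phi>0 x = 0"
  have e1: "(\<integral>y. Kop k f (y + s) * \<phi>0 y \<partial>lborel) = (\<integral>w. f (w + s) * psiK k \<phi>0 w \<partial>lborel)" for s
  proof -
    have "(\<integral>y. (\<integral>u. f (y - u + s) * k u \<partial>lborel) * \<phi>0 y \<partial>lborel) = (\<integral>w. f (w + s) * psiK k \<phi>0 w \<partial>lborel)"
      by (rule conv_fubini[OF km ki pm pi, of "\<lambda>z. f (z + s)" C]) (auto simp: fC)
    then show ?thesis unfolding Kop_def by (simp add: algebra_simps)
  qed
  have e2: "(\<integral>y. Kop k (Gf \<eta> t f C) (y - real N) * \<phi>0 y \<partial>lborel) = (\<integral>w. Gf \<eta> t f C (w - real N) * psiK k \<phi>0 w \<partial>lborel)"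
  proof -
    have "(\<integral>y. (\<integral>u. Gf \<eta> t f C (y - u - real N) * k u \<partial>lborel) * \<phi>0 y \<partial>lborel) = (\<integral>w. Gf \<eta> t f C (w - real N) * psiK k \<phi>0 w \<partial>lborel)"
      by (rule conv_fubini[OF km ki pm pi, of "\<lambda>z. Gf \<eta> t f C (z - real N)" C]) (auto simp: Gf_bound[OF U cof fm fC])
    then show ?thesis unfolding Kop_def by (simp add: algebra_simps)
  qed
  show "((\<lambda>s. \<integral>y. Kop k f (y + s) * \<phi>0 y \<partial>lborel) \<longlongrightarrow> (\<integral>y. Kop k (Gf \<eta> t f C) (y - real N) * \<phi>0 y \<partial>lborel)) (Fw \<eta> t N)"
    unfolding e1 e2 by (rule claimL[OF U cof fm fC fneg psiK_borel[OF km ki pm pi] psiK_int[OF km ki pm pi]])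
qed

lemma g_omega_Kf: "AE x in lebesgue. g_omega \<eta> t (Kop k f) x = Kop k (Gf \<eta> t f C) x"
  by (rule g_omega_AE[OF Kf_wstar U])

lemma conv_g_omega: "conv (g_omega \<eta> t f) k x = Kop k (Gf \<eta> t f C) x"
proof -
  have ae: "AE u in lebesgue. g_omega \<eta> t f (x - u) = Gf \<eta> t f C (x - u)"
    by (rule AE_lebesgue_refl[OF g_omega_Gf[OF U cof fm fC]])
  have m1: "(\<lambda>u. Gf \<eta> t f C (x - u) * k u) \<in> borel_measurable lebesgue"
    by (rule borel_lebesgue) measurable
  have m2: "(\<lambda>u. g_omega \<eta> t f (x - u) * k u) \<in> borel_measurable lebesgue"
    by (rule borel_measurable_AE[OF m1]) (use ae in \<open>eventually_elim, simp\<close>)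
  have "conv (g_omega \<eta> t f) k x = (\<integral>u. Gf \<eta> t f C (x - u) * k u \<partial>lebesgue)"
    unfolding conv_def by (rule integral_cong_AE[OF m2 m1]) (use ae in \<open>eventually_elim, simp\<close>)
  also have "\<dots> = Kop k (Gf \<eta> t f C) x"
    unfolding Kop_def by (rule integral_lebesgue_borel) measurable
  finally show ?thesis .
qed

end

abbreviation erl :: "nat \<Rightarrow> real \<Rightarrow> real" where "erl m \<equiv> erlang_density m 1"

lemma erl_eq: "erl m x = (if x < 0 then 0 else x ^ m * exp (- x) / fact m)"
  by (simp add: erlang_density_def)

lemma erl_nonneg: "0 \<le> erl m x" by simp

lemma erl_int: "integrable lborel (erl m)"
proof (rule integrableI_nonneg)
  show "erl m \<in> borel_measurable lborel" by simp
  show "AE x in lborel. 0 \<le> erl m x" by simp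
  have "prob_space (density lborel (erl m))" by (rule prob_space_erlang_density) simp
  then have "emeasure (density lborel (erl m)) UNIV = 1"
    using prob_space.emeasure_space_1 by fastforce
  then have "(\<integral>\<^sup>+x. ennreal (erl m x) \<partial>lborel) = 1"
    by (simp add: emeasure_density)
  then show "(\<integral>\<^sup>+x. ennreal (erl m x) \<partial>lborel) < \<infinity>" by simp
qed

lemma erl_conv: "(\<integral>y. erl k1 (x - y) * erl k2 y \<partial>lborel) = erl (Suc (k1 + k2)) x"
proof -
  have "(\<integral>y. erl k1 (x - y) * erl k2 y \<partial>lborel) = enn2real (\<integral>\<^sup>+y. ennreal (erl k1 (x - y) * erl k2 y) \<partial>lborel)"
    by (rule integral_eq_nn_integral) auto
  also have "(\<integral>\<^sup>+y. ennreal (erl k1 (x - y) * erl k2 y) \<partial>lborel) = (\<integral>\<^sup>+y. ennreal (erl k1 (x - y)) * ennreal (erl k2 y) \<partial>lborel)"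
    by (simp add: ennreal_mult)
  also have "\<dots> = ennreal (erl (Suc k1 + Suc k2 - 1) x)"
    using fun_cong[OF convolution_erlang_density[of 1 k1 k2], of x] by simp
  finally show ?thesis by simp
qed

lemma h_fun_erl: "h_fun = erl 0"
  by (auto simp: fun_eq_iff h_fun_def erl_eq)

lemma h_pow_erl: "h_pow (Suc m) = erl m"
proof (induction m)
  case 0 then show ?case by (simp add: h_fun_erl)
next
  case (Suc m)
  show ?case
  proof
    fix x
    have "h_pow (Suc (Suc m)) x = (\<integral>y. erl 0 (x - y) * erl m y \<partial>lebesgue)"
      by (simp add: conv_def h_fun_erl Suc)
    also have "\<dots> = (\<integral>y. erl 0 (x - y) * erl m y \<partial>lborel)"
      by (rule integral_lebesgue_borel) simp
    also have "\<dots> = erl (Suc m) x" by (simp add: erl_conv)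
    finally show "h_pow (Suc (Suc m)) x = erl (Suc m) x" .
  qed
qed

lemma Kop_refl: "Kop k g x = (\<integral>y. g y * k (x - y) \<partial>lborel)"
  unfolding Kop_def using lborel_integral_real_affine[of "-1" "\<lambda>u. g (x - u) * k u" x] by simp

lemma Kop_neg:
  assumes "\<And>u. u < 0 \<Longrightarrow> k u = 0" "\<And>u. u < 0 \<Longrightarrow> g u = 0" "x < 0"
  shows "Kop k g x = 0"
proof -
  have "g (x - u) * k u = 0" for u using assms by (cases "u < 0") auto
  then have "(\<lambda>u. g (x - u) * k u) = (\<lambda>u. 0)" by (intro ext)
  then show ?thesis unfolding Kop_def by simp
qed

lemma S_op_eq:
  assumes gm[measurable]: "g \<in> borel_measurable borel" and gneg: "\<And>u. u < 0 \<Longrightarrow> g u = 0"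
  shows "S_op g x = (\<integral>y. g y * erl 0 (x - y) \<partial>lborel)"
proof -
  have "S_op g x = exp (- x) * (\<integral>t. indicator {0..x} t *\<^sub>R (g t * exp t) \<partial>lebesgue)"
    by (simp add: S_op_def set_lebesgue_integral_def)
  also have "(\<integral>t. indicator {0..x} t *\<^sub>R (g t * exp t) \<partial>lebesgue) = (\<integral>t. indicator {0..x} t *\<^sub>R (g t * exp t) \<partial>lborel)"
    by (rule integral_lebesgue_borel) simp
  also have "exp (- x) * \<dots> = (\<integral>t. exp (- x) * (indicator {0..x} t *\<^sub>R (g t * exp t)) \<partial>lborel)"
    by simp
  also have "\<dots> = (\<integral>y. g y * erl 0 (x - y) \<partial>lborel)"
  proof (rule Bochner_Integration.integral_cong[OF refl])
    fix t :: real
    show "exp (- x) * (indicator {0..x} t *\<^sub>R (g t * exp t)) = g t * erl 0 (x - t)"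
      using gneg[of t] by (auto simp: indicator_def erl_eq mult_exp_exp)
  qed
  finally show ?thesis .
qed

lemma Sn_eq:
  assumes fm[measurable]: "f \<in> borel_measurable borel" and fC: "\<And>x. \<bar>f x\<bar> \<le> C"
    and fneg: "\<And>u. u < 0 \<Longrightarrow> f u = 0"
  shows "(S_op ^^ Suc m) f = Kop (erl m) f"
proof (induction m)
  case 0
  show ?case
  proof
    fix x show "(S_op ^^ Suc 0) f x = Kop (erl 0) f x"
      using S_op_eq[OF fm fneg, of x] by (simp add: Kop_refl)
  qed
next
  case (Suc m)
  show ?case
  proof
    fix x :: real
    have gm[measurable]: "Kop (erl m) f \<in> borel_measurable borel" by measurable
    have gneg: "Kop (erl m) f u = 0" if "u < 0" for u by (rule Kop_neg) (use that fneg in \<open>auto simp: erl_eq\<close>)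
    define \<phi> where "\<phi> y = erl 0 (x - y)" for y
    have pm[measurable]: "\<phi> \<in> borel_measurable borel" unfolding \<phi>_def by measurable
    have pi: "integrable lborel \<phi>"
      using lborel_integrable_real_affine[OF erl_int[of 0], of "-1" x] unfolding \<phi>_def by simp
    have "(S_op ^^ Suc (Suc m)) f x = S_op (Kop (erl m) f) x" using Suc by simp
    also have "\<dots> = (\<integral>y. Kop (erl m) f y * \<phi> y \<partial>lborel)"
      unfolding \<phi>_def by (rule S_op_eq[OF gm gneg])
    also have "\<dots> = (\<integral>y. (\<integral>u. f (y - u) * erl m u \<partial>lborel) * \<phi> y \<partial>lborel)"
      by (simp add: Kop_def)
    also have "\<dots> = (\<integral>w. f w * psiK (erl m) \<phi> w \<partial>lborel)"
      by (rule conv_fubini[OF _ erl_int pm pi fm fC]) simp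
    also have "\<dots> = (\<integral>w. f w * erl (Suc m) (x - w) \<partial>lborel)"
    proof (rule Bochner_Integration.integral_cong[OF refl])
      fix w
      have "psiK (erl m) \<phi> w = (\<integral>u. erl 0 ((x - w) - u) * erl m u \<partial>lborel)"
        by (subst psiK_def[OF _ erl_int pm pi]) (simp_all add: \<phi>_def algebra_simps)
      also have "\<dots> = erl (Suc m) (x - w)" by (simp add: erl_conv)
      finally show "f w * psiK (erl m) \<phi> w = f w * erl (Suc m) (x - w)" by simp
    qed
    also have "\<dots> = Kop (erl (Suc m)) f x" by (simp add: Kop_refl)
    finally show "(S_op ^^ Suc (Suc m)) f x = Kop (erl (Suc m)) f x" .
  qed
qed

lemma wstar_fun_cong:
  fixes f f2 :: "real \<Rightarrow> real"
  assumes ae: "AE x in lebesgue. x \<ge> 0 \<longrightarrow> f x = f2 x" and f2m: "f2 \<in> borel_measurable borel"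
    and ev: "\<forall>\<^sub>F s in F. s \<ge> 0"
  shows "is_wstar_lim F f = is_wstar_lim F f2"
proof -
  have eq: "(LINT x:{0..}|lebesgue. f (x + s) * \<phi> x) = (LINT x:{0..}|lebesgue. f2 (x + s) * \<phi> x)"
    if s: "s \<ge> 0" and \<phi>: "set_integrable lebesgue {0..} \<phi>" for s \<phi>
  proof -
    have pm: "(\<lambda>x. indicator {0..} x * \<phi> x) \<in> borel_measurable lebesgue"
      using \<phi> unfolding set_integrable_def by auto
    have ae2: "AE x in lebesgue. x \<ge> 0 \<longrightarrow> f (x + s) = f2 (x + s)"
      using AE_lebesgue_shift[OF ae, of s] by eventually_elim (use s in auto)
    have m2: "(\<lambda>x. indicator {0..} x *\<^sub>R (f2 (x + s) * \<phi> x)) \<in> borel_measurable lebesgue"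
    proof -
      have "(\<lambda>x. f2 (x + s)) \<in> borel_measurable lebesgue" by (rule borel_lebesgue) (use f2m in measurable)
      then have "(\<lambda>x. f2 (x + s) * (indicator {0..} x * \<phi> x)) \<in> borel_measurable lebesgue"
        using pm by (rule borel_measurable_times)
      then show ?thesis by (simp add: mult_ac)
    qed
    have ae3: "AE x in lebesgue. indicator {0..} x *\<^sub>R (f2 (x + s) * \<phi> x) = indicator {0..} x *\<^sub>R (f (x + s) * \<phi> x)"
      using ae2 by eventually_elim (auto simp: indicator_def)
    have m1: "(\<lambda>x. indicator {0..} x *\<^sub>R (f (x + s) * \<phi> x)) \<in> borel_measurable lebesgue"
      by (rule borel_measurable_AE[OF m2 ae3])
    show ?thesis unfolding set_lebesgue_integral_def
      by (rule integral_cong_AE[OF m1 m2]) (use ae3 in \<open>eventually_elim, auto\<close>)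
  qed
  show ?thesis
  proof (intro ext)
    fix G
    show "is_wstar_lim F f G = is_wstar_lim F f2 G"
      unfolding is_wstar_lim_def
    proof (intro conj_cong refl all_cong imp_cong)
      fix \<phi> :: "real \<Rightarrow> real" assume \<phi>: "set_integrable lebesgue {0..} \<phi>"
      have "\<forall>\<^sub>F s in F. (LINT x:{0..}|lebesgue. f (x + s) * \<phi> x) = (LINT x:{0..}|lebesgue. f2 (x + s) * \<phi> x)"
        using ev by eventually_elim (rule eq[OF _ \<phi>])
      then show "((\<lambda>s. LINT x:{0..}|lebesgue. f (x + s) * \<phi> x) \<longlongrightarrow> (LINT x:{0..}|lebesgue. G x * \<phi> x)) F =
          ((\<lambda>s. LINT x:{0..}|lebesgue. f2 (x + s) * \<phi> x) \<longlongrightarrow> (LINT x:{0..}|lebesgue. G x * \<phi> x)) F"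
        by (rule tendsto_cong)
    qed
  qed
qed

lemma g_omega_fun_cong:
  fixes f f2 :: "real \<Rightarrow> real"
  assumes ae: "AE x in lebesgue. x \<ge> 0 \<longrightarrow> f x = f2 x" and f2m: "f2 \<in> borel_measurable borel"
    and cof: "\<eta> \<le> cofinite" and t: "t \<ge> 0"
  shows "g_omega \<eta> t f = g_omega \<eta> t f2"
proof
  fix x
  have "wstar_lim (Fw \<eta> t N) f = wstar_lim (Fw \<eta> t N) f2" for N
    unfolding wstar_lim_def using wstar_fun_cong[OF ae f2m Fw_ev_ge[OF cof t]] by simp
  then show "g_omega \<eta> t f x = g_omega \<eta> t f2 x" by (simp add: g_omega_eq)
qed

lemma S_op_fun_cong:
  fixes f f2 :: "real \<Rightarrow> real"
  assumes ae: "AE x in lebesgue. x \<ge> 0 \<longrightarrow> f x = f2 x" and f2m: "f2 \<in> borel_measurable borel"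
  shows "S_op f = S_op f2"
proof
  fix x
  have m2: "(\<lambda>t. indicator {0..x} t *\<^sub>R (f2 t * exp t)) \<in> borel_measurable lebesgue"
    by (rule borel_lebesgue) (use f2m in measurable)
  have ae3: "AE t in lebesgue. indicator {0..x} t *\<^sub>R (f2 t * exp t) = indicator {0..x} t *\<^sub>R (f t * exp t)"
    using ae by eventually_elim (auto simp: indicator_def)
  have m1: "(\<lambda>t. indicator {0..x} t *\<^sub>R (f t * exp t)) \<in> borel_measurable lebesgue"
    by (rule borel_measurable_AE[OF m2 ae3])
  have "(LINT t:{0..x}|lebesgue. f t * exp t) = (LINT t:{0..x}|lebesgue. f2 t * exp t)"
    unfolding set_lebesgue_integral_def
    by (rule integral_cong_AE[OF m1 m2]) (use ae3 in \<open>eventually_elim, auto\<close>)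
  then show "S_op f x = S_op f2 x" by (simp add: S_op_def)
qed

lemma nice_rep:
  assumes "Linf_pos f"
  obtains f2 C where "f2 \<in> borel_measurable borel" "\<And>x. \<bar>f2 x\<bar> \<le> C" "\<And>x. x < 0 \<Longrightarrow> f2 x = 0"
    "AE x in lebesgue. x \<ge> 0 \<longrightarrow> f x = f2 x"
proof -
  from assms obtain C0 where m: "(\<lambda>x. indicator {0..} x *\<^sub>R f x) \<in> borel_measurable lebesgue"
    and b: "AE x in lebesgue. x \<in> {0..} \<longrightarrow> \<bar>f x\<bar> \<le> C0"
    unfolding Linf_pos_def set_borel_measurable_def by auto
  from completion_ex_borel_measurable_real[OF m]
  obtain f1 where f1: "f1 \<in> borel_measurable lborel" "AE x in lborel. indicator {0..} x *\<^sub>R f x = f1 x" by blast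
  define C where "C = \<bar>C0\<bar>"
  define f2 where "f2 x = indicator {0..} x * max (- C) (min C (f1 x))" for x
  show ?thesis
  proof (rule that)
    show "f2 \<in> borel_measurable borel" unfolding f2_def using f1(1) by simp
    show "\<bar>f2 x\<bar> \<le> C" for x unfolding f2_def C_def by (auto simp: indicator_def)
    show "f2 x = 0" if "x < 0" for x using that by (simp add: f2_def)
    have "AE x in lebesgue. indicator {0..} x *\<^sub>R f x = f1 x" by (rule AE_completion[OF f1(2)])
    with b show "AE x in lebesgue. x \<ge> 0 \<longrightarrow> f x = f2 x"
      by eventually_elim (auto simp: f2_def C_def indicator_def)
  qed
qed

theorem theorem5p3:
  fixes f :: "real \<Rightarrow> real" and \<eta> :: "nat filter" and t :: real and n :: nat
  assumes "Linf_pos f"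
    and "ultrafilter_on \<eta>" and "\<eta> \<le> cofinite"
    and "t \<in> {0..1}"
    and "n \<ge> 1"
  shows "AE x in lebesgue.
           g_omega \<eta> t ((S_op ^^ n) f) x = conv (g_omega \<eta> t f) (h_pow n) x \<and>
           conv (g_omega \<eta> t f) (h_pow n) x =
             (LINT s:{0..}|lebesgue. g_omega \<eta> t f (x - s) * exp (- s) * s ^ (n - 1) / fact (n - 1))"
proof -
  obtain f2 C where f2m[measurable]: "f2 \<in> borel_measurable borel" and fC: "\<And>x. \<bar>f2 x\<bar> \<le> C"
    and fneg: "\<And>x. x < 0 \<Longrightarrow> f2 x = 0" and ae: "AE x in lebesgue. x \<ge> 0 \<longrightarrow> f x = f2 x"
    using nice_rep[OF assms(1)] by blast
  obtain m where n: "n = Suc m" using assms(5) by (cases n) auto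
  have t0: "t \<ge> 0" using assms(4) by simp
  have go: "g_omega \<eta> t f = g_omega \<eta> t f2" by (rule g_omega_fun_cong[OF ae f2m assms(3) t0])
  have Sn: "(S_op ^^ n) f = Kop (erl m) f2"
  proof -
    have "(S_op ^^ n) f = (S_op ^^ m) (S_op f)" by (simp only: n funpow_Suc_right comp_def)
    also have "S_op f = S_op f2" by (rule S_op_fun_cong[OF ae f2m])
    also have "(S_op ^^ m) (S_op f2) = (S_op ^^ Suc m) f2" by (simp only: funpow_Suc_right comp_def)
    also have "\<dots> = Kop (erl m) f2" by (rule Sn_eq[OF f2m fC fneg])
    finally show ?thesis .
  qed
  have hp: "h_pow n = erl m" using h_pow_erl n by simp
  have A: "AE x in lebesgue. g_omega \<eta> t (Kop (erl m) f2) x = Kop (erl m) (Gf \<eta> t f2 C) x"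
    by (rule g_omega_Kf[OF assms(2) assms(3) f2m fC fneg borel_measurable_erlang_density erl_int])
  have B: "conv (g_omega \<eta> t f2) (erl m) x = Kop (erl m) (Gf \<eta> t f2 C) x" for x
    by (rule conv_g_omega[OF assms(2) assms(3) f2m fC fneg borel_measurable_erlang_density erl_int])
  have Cc: "conv g (erl m) x = (LINT s:{0..}|lebesgue. g (x - s) * exp (- s) * s ^ (n - 1) / fact (n - 1))" for g x
    unfolding conv_def set_lebesgue_integral_def n
    by (rule Bochner_Integration.integral_cong) (auto simp: erl_eq indicator_def)
  from A show ?thesis
  proof eventually_elim
    case (elim x)
    show ?case unfolding go Sn hp using elim B[of x] Cc[of "g_omega \<eta> t f2" x] by simp
  qed
qed

end
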